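(* Let $\lambda$ be a Borel measure on $\mathbb{S}^{n-1}$ which is absolutely continuous with respect to spherical Lebesgue measure, and let $K,L\in\mathcal{K}^n_0$. Then for $p\neq0$, $$\frac{d}{dt}G(K\hat{+}_p t\cdot L)\Big|_{t=0}=\frac{1}{p}\int_{\mathbb{S}^{n-1}}\rho_L^{-p}(u)\,d\lambda_p(K,u),$$ and for $p=0$, $$\frac{d}{dt}G(K\hat{+}_0 t\cdot L)\Big|_{t=0}=-\int_{\mathbb{S}^{n-1}}\log\rho_L(u)\,d\lambda(K,u).$$
   Context: $\mathcal{K}^n_0$ is the set of compact convex subsets of $\mathbb{R}^n$ containing the origin in their interior. For $K\in\mathcal{K}^n_0$: $h_K(x)=\max_{y\in K}\langle y,x\rangle$, $\rho_K(u)=\max\{t>0:tu\in K\}$, and the polar body is $K^*=\bigcap_{y\in K}\{x:\langle x,y\rangle\le1\}$. For a closed set $\Omega\subset\mathbb{S}^{n-1}$ not contained in any closed hemisphere and a continuous $h:\Omega\to(0,\infty)$, the Wulff shape is $[h]=\bigcap_{x\in\Omega}\{y\in\mathbb{R}^n:\langle x,y\rangle\le h(x)\}$. For $t$ with $|t|$ small, the $L_p$ Minkowski combination is $K+_p t\cdot L=[(h_K^p+t h_L^p)^{1/p}]$ for $p\neq0$ and $K+_0 t\cdot L=[h_K h_L^t]$, and the $L_p$ harmonic combination is $K\hat{+}_p t\cdot L=(K^*+_p t\cdot L^* )^*$. The general entropy is $G(K)=-\int_{\mathbb{S}^{n-1}}\log h_K(x)\,d\lambda(x)$. The radial Gauss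 image of $\omega\subset\mathbb{S}^{n-1}$ is $\boldsymbol{\alpha}_K(\omega)=\{x\in\mathbb{S}^{n-1}:\langle\rho_K(u)u,x\rangle=h_K(x)\text{ for some }u\in\omega\}$; the Gauss image measure is $\lambda(K,\omega)=\lambda(\boldsymbol{\alpha}_K(\omega))$, and the $L_p$ Gauss image measure is given by $d\lambda_p(K,\cdot)=\rho_K^p\,d\lambda(K,\cdot)$. *)

theory Defs
  imports "HOL-Analysis.Analysis"
begin

definition convex_body0 :: "'a::euclidean_space set \<Rightarrow> bool" where
  "convex_body0 K \<longleftrightarrow> compact K \<and> convex K \<and> 0 \<in> interior K"

definition supp :: "'a::euclidean_space set \<Rightarrow> 'a \<Rightarrow> real" where
  "supp K x = (SUP y\<in>K. y \<bullet> x)"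

definition radial :: "'a::euclidean_space set \<Rightarrow> 'a \<Rightarrow> real" where
  "radial K u = Sup {t. t > 0 \<and> t *\<^sub>R u \<in> K}"

definition polar :: "'a::euclidean_space set \<Rightarrow> 'a set" where
  "polar K = (\<Inter>y\<in>K. {x. x \<bullet> y \<le> 1})"

definition wulff :: "'a::euclidean_space set \<Rightarrow> ('a \<Rightarrow> real) \<Rightarrow> 'a set" where
  "wulff \<Omega> h = (\<Inter>x\<in>\<Omega>. {y. x \<bullet> y \<le> h x})"

definition lp_comb :: "real \<Rightarrow> 'a::euclidean_space set \<Rightarrow> real \<Rightarrow> 'a set \<Rightarrow> 'a set" where
  "lp_comb p K t L =
     (if p \<noteq> 0
      then wulff (sphere 0 1) (\<lambda>x. (supp K x powr p + t * supp L x powr p) powr (1 / p))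
      else wulff (sphere 0 1) (\<lambda>x. supp K x * supp L x powr t))"

definition lp_harm_comb :: "real \<Rightarrow> 'a::euclidean_space set \<Rightarrow> real \<Rightarrow> 'a set \<Rightarrow> 'a set" where
  "lp_harm_comb p K t L = polar (lp_comb p (polar K) t (polar L))"

definition gen_entropy :: "'a::euclidean_space measure \<Rightarrow> 'a set \<Rightarrow> real" where
  "gen_entropy M K = - (\<integral>x. ln (supp K x) \<partial>M)"

definition radial_gauss_image :: "'a::euclidean_space set \<Rightarrow> 'a set \<Rightarrow> 'a set" where
  "radial_gauss_image K \<omega> =
     {x \<in> sphere 0 1. \<exists>u\<in>\<omega>. (radial K u *\<^sub>R u) \<bullet> x = supp K x}"

definition sphere_borel :: "'a::euclidean_space measure" where
  "sphere_borel = restrict_space borel (sphere 0 1)"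

text \<open>Spherical Lebesgue measure, via the cone-volume formula
  sigma(A) = n * vol({t u : u in A, 0 < t <= 1}).\<close>
definition sphere_cone :: "'a::euclidean_space set \<Rightarrow> 'a set" where
  "sphere_cone A = {t *\<^sub>R u |t u. 0 < t \<and> t \<le> 1 \<and> u \<in> A}"

definition spherical_lebesgue :: "'a::euclidean_space measure" where
  "spherical_lebesgue =
     measure_of (sphere 0 1) (sets sphere_borel)
       (\<lambda>A. of_nat DIM('a) * emeasure lebesgue (sphere_cone A))"

text \<open>Gauss image measure lambda(K, omega) = lambda(alpha_K(omega)); the
  measure of alpha_K(omega) is taken in the completion of lambda (alpha_K(omega)
  is Lebesgue measurable for Borel omega).\<close>
definition gauss_image_measure :: "'a::euclidean_space measure \<Rightarrow> 'a set \<Rightarrow> 'a measure" where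
  "gauss_image_measure M K =
     measure_of (space M) (sets M) (\<lambda>\<omega>. emeasure (completion M) (radial_gauss_image K \<omega>))"

definition lp_gauss_image_measure :: "real \<Rightarrow> 'a::euclidean_space measure \<Rightarrow> 'a set \<Rightarrow> 'a measure" where
  "lp_gauss_image_measure p M K =
     density (gauss_image_measure M K) (\<lambda>u. ennreal (radial K u powr p))"

end

theory Submission
  imports Defs
begin


section \<open>Support functions of bounded sets\<close>

lemma supp_bdd:
  fixes B :: "'a::euclidean_space set"
  assumes "B \<subseteq> cball 0 R"
  shows "bdd_above ((\<lambda>y. y \<bullet> x) ` B)"
proof -
  have "y \<bullet> x \<le> R * norm x" if "y \<in> B" for y
  proof -
    have "y \<bullet> x \<le> norm y * norm x" by (rule norm_cauchy_schwarz)
    also have "\<dots> \<le> R * norm x" using assms that by (auto intro!: mult_right_mono)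
    finally show ?thesis .
  qed
  then show ?thesis by (auto simp: bdd_above_def)
qed

lemma supp_upper:
  fixes B :: "'a::euclidean_space set"
  assumes "B \<subseteq> cball 0 R" "y \<in> B"
  shows "y \<bullet> x \<le> supp B x"
  unfolding supp_def by (rule cSUP_upper[OF assms(2) supp_bdd[OF assms(1)]])

lemma supp_least:
  fixes B :: "'a::euclidean_space set"
  assumes "B \<noteq> {}" "\<And>y. y \<in> B \<Longrightarrow> y \<bullet> x \<le> c"
  shows "supp B x \<le> c"
  unfolding supp_def using assms by (intro cSUP_least) auto

lemma supp_lipschitz:
  fixes B :: "'a::euclidean_space set"
  assumes "B \<subseteq> cball 0 R" "B \<noteq> {}"
  shows "supp B x \<le> supp B z + R * norm (x - z)"
proof (rule supp_least[OF assms(2)])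
  fix y assume y: "y \<in> B"
  have "y \<bullet> x = y \<bullet> z + y \<bullet> (x - z)" by (simp add: inner_diff_right)
  also have "y \<bullet> (x - z) \<le> norm y * norm (x - z)" by (rule norm_cauchy_schwarz)
  also have "\<dots> \<le> R * norm (x - z)" using assms y by (auto intro!: mult_right_mono)
  finally show "y \<bullet> x \<le> supp B z + R * norm (x - z)"
    using supp_upper[OF assms(1) y, of z] by linarith
qed

lemma supp_continuous:
  fixes B :: "'a::euclidean_space set"
  assumes "B \<subseteq> cball 0 R" "B \<noteq> {}"
  shows "continuous_on A (supp B)"
proof -
  have R: "R \<ge> 0"
  proof -
    obtain y where "y \<in> B" using assms(2) by blast
    then have "norm y \<le> R" using assms(1) by auto
    then show ?thesis using norm_ge_zero[of y] by linarith
  qed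
  show ?thesis
  unfolding continuous_on_iff
  proof (intro ballI allI impI)
    fix x e assume "x \<in> A" "(0::real) < e"
    show "\<exists>d>0. \<forall>x'\<in>A. dist x' x < d \<longrightarrow> dist (supp B x') (supp B x) < e"
    proof (intro exI[of _ "e / (R + 1)"] conjI ballI impI)
      show "0 < e / (R + 1)" using \<open>0 < e\<close> R by auto
      fix x' assume "dist x' x < e / (R + 1)"
      then have d: "norm (x' - x) * (R + 1) < e" using R by (simp add: dist_norm pos_less_divide_eq)
      have 1: "supp B x' \<le> supp B x + R * norm (x' - x)" by (rule supp_lipschitz[OF assms])
      have 2: "supp B x \<le> supp B x' + R * norm (x - x')" by (rule supp_lipschitz[OF assms])
      have "R * norm (x' - x) \<le> norm (x' - x) * (R + 1)" using R by (simp add: algebra_simps)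
      then have "R * norm (x' - x) < e" using d by linarith
      moreover have "norm (x - x') = norm (x' - x)" by (simp add: norm_minus_commute)
      ultimately show "dist (supp B x') (supp B x) < e" using 1 2 by (simp add: dist_real_def abs_less_iff)
    qed
  qed
qed

lemma bounded_cball0:
  fixes B :: "'a::real_normed_vector set"
  assumes "bounded B"
  obtains R where "B \<subseteq> cball 0 R" "R > 0"
proof -
  from assms obtain b where "b > 0" "\<forall>x\<in>B. norm x \<le> b" unfolding bounded_pos by blast
  then show ?thesis using that[of b] by (auto simp: subset_iff)
qed

lemma supp_attained:
  fixes B :: "'a::euclidean_space set"
  assumes "compact B" "B \<noteq> {}"
  obtains y where "y \<in> B" "supp B x = y \<bullet> x"
proof -
  obtain R where R: "B \<subseteq> cball 0 R"
    using bounded_cball0[OF compact_imp_bounded[OF assms(1)]] by metis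
  obtain y where y: "y \<in> B" "\<And>z. z \<in> B \<Longrightarrow> z \<bullet> x \<le> y \<bullet> x"
  proof -
    have "continuous_on B (\<lambda>y. y \<bullet> x)" by (intro continuous_intros)
    from continuous_attains_sup[OF assms this] show ?thesis using that by blast
  qed
  have "supp B x = y \<bullet> x"
    using supp_upper[OF R y(1)] supp_least[OF assms(2) y(2)] by (meson order.antisym)
  with y show ?thesis using that by blast
qed

section \<open>Convex bodies\<close>

lemma cb_balls:
  fixes K :: "'a::euclidean_space set"
  assumes "convex_body0 K"
  obtains r R where "0 < r" "cball 0 r \<subseteq> K" "K \<subseteq> cball 0 R" "r \<le> R"
proof -
  from assms have "0 \<in> interior K" "compact K" by (auto simp: convex_body0_def)
  then obtain e where e: "e > 0" "ball 0 e \<subseteq> K" by (meson mem_interior)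
  have c: "cball 0 (e/2) \<subseteq> K" using e by (intro subset_trans[OF _ e(2)]) (auto simp: subset_iff)
  obtain R where R: "K \<subseteq> cball 0 R"
    using bounded_cball0[OF compact_imp_bounded[OF \<open>compact K\<close>]] by metis
  have "e/2 \<le> R"
  proof -
    obtain b :: 'a where b: "b \<in> Basis" using nonempty_Basis by blast
    have nb: "norm ((e/2) *\<^sub>R b) = e/2" using b e by (simp add: norm_Basis)
    then have "(e/2) *\<^sub>R b \<in> cball 0 (e/2)" by simp
    then have "(e/2) *\<^sub>R b \<in> cball 0 R" using c R by blast
    then show ?thesis using nb by simp
  qed
  then show ?thesis using that[of "e/2" R] c R e by auto
qed


lemma cb_compact: "convex_body0 K \<Longrightarrow> compact K"
  and cb_convex: "convex_body0 K \<Longrightarrow> convex K"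
  and cb_interior: "convex_body0 K \<Longrightarrow> 0 \<in> interior K"
  by (auto simp: convex_body0_def)

lemma cb_nonempty: "convex_body0 K \<Longrightarrow> K \<noteq> {}"
  using cb_interior interior_subset by blast

lemma scaled_in_cball:
  fixes x :: "'a::real_normed_vector"
  assumes "x \<noteq> 0" "r > 0"
  shows "(r / norm x) *\<^sub>R x \<in> cball 0 r"
  using assms by simp

lemma inner_scaled_self:
  fixes x :: "'a::real_inner"
  shows "((r / norm x) *\<^sub>R x) \<bullet> x = r * norm x"
  by (cases "x = 0") (simp_all add: power2_norm_eq_inner[symmetric] power2_eq_square)

lemma supp_pos:
  fixes K :: "'a::euclidean_space set"
  assumes "cball 0 r \<subseteq> K" "K \<subseteq> cball 0 R" "r > 0" "x \<noteq> 0"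
  shows "supp K x \<ge> r * norm x"
proof -
  have "(r / norm x) *\<^sub>R x \<in> K" using scaled_in_cball[OF assms(4,3)] assms(1) by blast
  from supp_upper[OF assms(2) this, of x] show ?thesis using inner_scaled_self[of r x] by linarith
qed

locale cbody =
  fixes K :: "'a::euclidean_space set" and r R :: real
  assumes cb: "convex_body0 K" and r: "0 < r" and rK: "cball 0 r \<subseteq> K" and KR: "K \<subseteq> cball 0 R"
begin

lemma rR: "r \<le> R"
proof -
  obtain b :: 'a where b: "b \<in> Basis" using nonempty_Basis by blast
  have nb: "norm (r *\<^sub>R b) = r" using b r by (simp add: norm_Basis)
  then have "r *\<^sub>R b \<in> cball 0 r" by simp
  then have "r *\<^sub>R b \<in> cball 0 R" using rK KR by blast
  then show ?thesis using nb by simp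
qed

lemma Rpos: "R > 0" using rR r by linarith

lemma closedK: "closed K" using cb_compact[OF cb] compact_imp_closed by blast

lemma supp_posK: "x \<noteq> 0 \<Longrightarrow> supp K x \<ge> r * norm x"
  using supp_pos[OF rK KR r] by blast

lemma supp_upperK: "y \<in> K \<Longrightarrow> y \<bullet> x \<le> supp K x"
  using supp_upper[OF KR] by blast

lemma supp_contK: "continuous_on A (supp K)"
  using supp_continuous[OF KR cb_nonempty[OF cb]] by blast

lemma radial_set_bdd: "bdd_above {t. t > 0 \<and> t *\<^sub>R u \<in> K}" if "u \<in> sphere 0 1"
proof -
  have "t \<le> R" if "t > 0" "t *\<^sub>R u \<in> K" for t
    using that KR \<open>u \<in> sphere 0 1\<close> by (auto simp: subset_iff)
  then show ?thesis by (auto simp: bdd_above_def)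
qed

lemma radial_r_mem: "r \<in> {t. t > 0 \<and> t *\<^sub>R u \<in> K}" if "u \<in> sphere 0 1"
  using that r rK by (auto simp: subset_iff)

lemma radial_upper: "0 < t \<Longrightarrow> t *\<^sub>R u \<in> K \<Longrightarrow> u \<in> sphere 0 1 \<Longrightarrow> t \<le> radial K u"
  unfolding radial_def by (rule cSup_upper) (auto intro: radial_set_bdd)

lemma radial_ge_r: "u \<in> sphere 0 1 \<Longrightarrow> r \<le> radial K u"
  using radial_upper[of r u] radial_r_mem[of u] by auto

lemma radial_pos: "u \<in> sphere 0 1 \<Longrightarrow> 0 < radial K u"
  using radial_ge_r r by fastforce

lemma radial_le_R: "u \<in> sphere 0 1 \<Longrightarrow> radial K u \<le> R"
  unfolding radial_def
  using radial_r_mem KR by (intro cSup_least) (auto simp: subset_iff)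

lemma radial_mem: assumes u: "u \<in> sphere 0 1" shows "radial K u *\<^sub>R u \<in> K"
proof (rule ccontr)
  let ?T = "{t. t > 0 \<and> t *\<^sub>R u \<in> K}"
  let ?s = "radial K u"
  assume "radial K u *\<^sub>R u \<notin> K"
  then have "?s *\<^sub>R u \<in> - K" by simp
  moreover have "open (- K)" using closedK by auto
  ultimately obtain e where e: "e > 0" "ball (?s *\<^sub>R u) e \<subseteq> - K"
    using open_contains_ball by blast
  have "?s - e < Sup ?T" using e by (simp add: radial_def)
  then obtain t where t: "t \<in> ?T" "?s - e < t"
    using less_cSup_iff[of ?T "?s - e"] radial_set_bdd[OF u] radial_r_mem[OF u] by blast
  have "t \<le> ?s" using radial_upper t u by auto
  have "dist (?s *\<^sub>R u) (t *\<^sub>R u) = \<bar>?s - t\<bar>"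
    using u by (simp add: dist_norm scaleR_diff_left[symmetric])
  also have "\<dots> < e" using t \<open>t \<le> ?s\<close> by linarith
  finally have "t *\<^sub>R u \<in> ball (?s *\<^sub>R u) e" by (simp only: mem_ball)
  then have "t *\<^sub>R u \<in> - K" using e(2) by blast
  then show False using t by auto
qed

lemma radial_below: assumes u: "u \<in> sphere 0 1" and t: "0 \<le> t" "t \<le> radial K u"
  shows "t *\<^sub>R u \<in> K"
proof -
  have s: "radial K u > 0" using radial_pos[OF u] .
  have "0 \<in> K" using cb_interior[OF cb] interior_subset by blast
  have "(t / radial K u) *\<^sub>R (radial K u *\<^sub>R u) + (1 - t / radial K u) *\<^sub>R 0 \<in> K"
    by (rule convexD[OF cb_convex[OF cb] radial_mem[OF u] \<open>0 \<in> K\<close>]) (use s t in \<open>auto simp: field_simps\<close>)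
  then show ?thesis using s by simp
qed

lemma radial_not_interior: assumes u: "u \<in> sphere 0 1"
  shows "radial K u *\<^sub>R u \<notin> interior K"
proof
  assume "radial K u *\<^sub>R u \<in> interior K"
  then obtain e where e: "e > 0" "ball (radial K u *\<^sub>R u) e \<subseteq> K"
    using mem_interior by blast
  have "dist (radial K u *\<^sub>R u) ((radial K u + e/2) *\<^sub>R u) = e/2"
    using u e by (simp add: dist_norm scaleR_diff_left[symmetric] algebra_simps)
  then have "(radial K u + e/2) *\<^sub>R u \<in> K" using e by auto
  have "radial K u + e/2 \<le> radial K u"
    by (rule radial_upper[OF _ \<open>(radial K u + e/2) *\<^sub>R u \<in> K\<close> u]) (use radial_pos[OF u] e in linarith)
  then show False using e by linarith
qed

lemma polar_sub: "polar K \<subseteq> cball 0 (1/r)"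
proof
  fix z assume z: "z \<in> polar K"
  show "z \<in> cball 0 (1/r)"
  proof (cases "z = 0")
    case False
    have "(r / norm z) *\<^sub>R z \<in> K" using scaled_in_cball[OF False r] rK by blast
    then have "z \<bullet> ((r / norm z) *\<^sub>R z) \<le> 1" using z by (auto simp: polar_def)
    then have "r * norm z \<le> 1" using inner_scaled_self[of r z] by (simp add: inner_commute)
    then show ?thesis using r by (simp add: field_simps)
  qed (use r in simp)
qed

lemma zero_polar: "0 \<in> polar K" by (simp add: polar_def)

lemma polar_nonempty: "polar K \<noteq> {}" using zero_polar by blast

lemma supp_polar: assumes u: "u \<in> sphere 0 1"
  shows "supp (polar K) u = 1 / radial K u"
proof (rule order.antisym)
  let ?s = "radial K u"
  have s: "?s > 0" using radial_pos[OF u] .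
  show "supp (polar K) u \<le> 1 / ?s"
  proof (rule supp_least[OF polar_nonempty])
    fix z assume "z \<in> polar K"
    then have "z \<bullet> (?s *\<^sub>R u) \<le> 1" using radial_mem[OF u] by (auto simp: polar_def)
    then show "z \<bullet> u \<le> 1 / ?s" using s by (simp add: field_simps)
  qed
  have int: "interior K \<noteq> {}" using cb_interior[OF cb] by blast
  have mem: "?s *\<^sub>R u \<in> closure K" using radial_mem[OF u] closure_subset by blast
  have nri: "?s *\<^sub>R u \<notin> rel_interior K"
    using radial_not_interior[OF u] rel_interior_nonempty_interior[OF int] by simp
  obtain a where a: "a \<noteq> 0" "\<And>y. y \<in> closure K \<Longrightarrow> a \<bullet> (?s *\<^sub>R u) \<le> a \<bullet> y"
    "\<And>y. y \<in> rel_interior K \<Longrightarrow> a \<bullet> (?s *\<^sub>R u) < a \<bullet> y"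
    using supporting_hyperplane_relative_frontier[OF cb_convex[OF cb] mem nri] by blast
  define w where "w = - a"
  have w0: "w \<noteq> 0" using a by (simp add: w_def)
  have wy: "w \<bullet> y \<le> w \<bullet> (?s *\<^sub>R u)" if "y \<in> K" for y
    using a(2)[of y] that closure_subset by (auto simp: w_def)
  have "(r / norm w) *\<^sub>R w \<in> K" using scaled_in_cball[OF w0 r] rK by blast
  from wy[OF this] have "r * norm w \<le> w \<bullet> (?s *\<^sub>R u)"
    using inner_scaled_self[of r w] by (simp add: inner_commute)
  moreover have "0 < r * norm w" using r w0 by simp
  ultimately have pos: "w \<bullet> (?s *\<^sub>R u) > 0" by linarith
  define z where "z = (1 / (w \<bullet> (?s *\<^sub>R u))) *\<^sub>R w"
  have "z \<in> polar K"
    unfolding polar_def z_def using wy pos by (auto simp: field_simps)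
  then have "z \<bullet> u \<le> supp (polar K) u" using supp_upper[OF polar_sub] by blast
  moreover have "z \<bullet> u = 1 / ?s"
  proof -
    have "w \<bullet> u \<noteq> 0" using pos by auto
    then show ?thesis using s by (simp add: z_def field_simps)
  qed
  ultimately show "1 / ?s \<le> supp (polar K) u" by simp
qed

lemma radial_cont: "continuous_on (sphere 0 1) (radial K)"
proof -
  have nz: "\<forall>u\<in>sphere 0 1. supp (polar K) u \<noteq> 0"
  proof
    fix u :: 'a assume u: "u \<in> sphere 0 1"
    show "supp (polar K) u \<noteq> 0" using supp_polar[OF u] radial_pos[OF u] by simp
  qed
  have "continuous_on (sphere 0 1) (\<lambda>u. 1 / supp (polar K) u)"
    by (rule continuous_on_divide[OF continuous_on_const supp_continuous[OF polar_sub polar_nonempty] nz])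
  then show ?thesis
    by (rule continuous_on_cong[THEN iffD1, rotated 2]) (auto simp: supp_polar radial_pos)
qed

lemma radial_of_point: assumes "y \<in> K" "y \<noteq> 0"
  shows "norm y \<le> radial K (y /\<^sub>R norm y)"
proof -
  have "norm y *\<^sub>R (y /\<^sub>R norm y) = y" using assms by simp
  then show ?thesis using radial_upper[of "norm y" "y /\<^sub>R norm y"] assms by simp
qed

end

lemma cbodyI: assumes "convex_body0 K" obtains r R where "cbody K r R"
  using cb_balls[OF assms] by (metis cbody.intro assms)


section \<open>Polar of a Wulff shape\<close>

locale wulffpos =
  fixes h :: "'a::euclidean_space \<Rightarrow> real" and c :: real
  assumes c: "c > 0" and hc: "\<And>x. x \<in> sphere 0 1 \<Longrightarrow> c \<le> h x"
begin

lemma ball_in_wulff: "cball 0 c \<subseteq> wulff (sphere 0 1) h"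
proof
  fix y :: 'a assume y: "y \<in> cball 0 c"
  have "x \<bullet> y \<le> h x" if x: "x \<in> sphere 0 1" for x
  proof -
    have "x \<bullet> y \<le> norm x * norm y" by (rule norm_cauchy_schwarz)
    also have "\<dots> \<le> c" using x y by simp
    finally show ?thesis using hc[OF x] by linarith
  qed
  then show "y \<in> wulff (sphere 0 1) h" by (auto simp: wulff_def)
qed

lemma polar_wulff_sub: "polar (wulff (sphere 0 1) h) \<subseteq> cball 0 (1/c)"
proof
  fix z assume z: "z \<in> polar (wulff (sphere 0 1) h)"
  show "z \<in> cball 0 (1/c)"
  proof (cases "z = 0")
    case False
    have "(c / norm z) *\<^sub>R z \<in> wulff (sphere 0 1) h"
      using scaled_in_cball[OF False c] ball_in_wulff by blast
    then have "z \<bullet> ((c / norm z) *\<^sub>R z) \<le> 1" using z by (auto simp: polar_def)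
    then have "c * norm z \<le> 1" using inner_scaled_self[of c z] by (simp add: inner_commute)
    then show ?thesis using c by (simp add: field_simps)
  qed (use c in simp)
qed

lemma polar_wulff_ne: "polar (wulff (sphere 0 1) h) \<noteq> {}"
proof -
  have "0 \<in> polar (wulff (sphere 0 1) h)" by (simp add: polar_def)
  then show ?thesis by blast
qed

lemma supp_polar_wulff_upper:
  assumes "x \<in> sphere 0 1"
  shows "(x \<bullet> v) / h x \<le> supp (polar (wulff (sphere 0 1) h)) v"
proof -
  have hx: "h x > 0" using hc[OF assms] c by linarith
  have "(1 / h x) *\<^sub>R x \<in> polar (wulff (sphere 0 1) h)"
    using assms hx by (auto simp: polar_def wulff_def field_simps)
  from supp_upper[OF polar_wulff_sub this, of v] show ?thesis by simp
qed

lemma supp_polar_wulff_least: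
  assumes U: "\<And>x. x \<in> sphere 0 1 \<Longrightarrow> (x \<bullet> v) / h x \<le> U"
  shows "supp (polar (wulff (sphere 0 1) h)) v \<le> U"
proof (cases "v = 0")
  case True
  have "supp (polar (wulff (sphere 0 1) h)) v \<le> 0"
    using True by (intro supp_least[OF polar_wulff_ne]) auto
  moreover have "0 \<le> U"
  proof -
    obtain b :: 'a where "b \<in> Basis" using nonempty_Basis by blast
    then have "b \<in> sphere 0 1" by simp
    from U[OF this] show ?thesis using True by simp
  qed
  ultimately show ?thesis by linarith
next
  case False
  have vS: "v /\<^sub>R norm v \<in> sphere 0 1" using False by simp
  have hv: "h (v /\<^sub>R norm v) > 0" using hc[OF vS] c by linarith
  have "(v /\<^sub>R norm v) \<bullet> v = norm v"
    using False by (simp add: power2_norm_eq_inner[symmetric] power2_eq_square)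
  then have "0 < (v /\<^sub>R norm v) \<bullet> v / h (v /\<^sub>R norm v)" using False hv by simp
  with U[OF vS] have Upos: "U > 0" by linarith
  have y0: "(1 / U) *\<^sub>R v \<in> wulff (sphere 0 1) h"
  proof -
    have "x \<bullet> ((1 / U) *\<^sub>R v) \<le> h x" if x: "x \<in> sphere 0 1" for x
    proof -
      have hx: "h x > 0" using hc[OF x] c by linarith
      have "x \<bullet> v \<le> U * h x" using U[OF x] hx by (simp add: field_simps)
      then show ?thesis using Upos by (simp add: field_simps)
    qed
    then show ?thesis by (auto simp: wulff_def)
  qed
  show ?thesis
  proof (rule supp_least[OF polar_wulff_ne])
    fix z assume "z \<in> polar (wulff (sphere 0 1) h)"
    then have "z \<bullet> ((1 / U) *\<^sub>R v) \<le> 1" using y0 by (auto simp: polar_def)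
    then show "z \<bullet> v \<le> U" using Upos by (simp add: field_simps)
  qed
qed

lemma supp_polar_wulff_cont: "continuous_on A (supp (polar (wulff (sphere 0 1) h)))"
  using supp_continuous[OF polar_wulff_sub polar_wulff_ne] .

lemma supp_polar_wulff_pos:
  assumes "v \<in> sphere 0 1"
  shows "supp (polar (wulff (sphere 0 1) h)) v > 0"
proof -
  have hv: "h v > 0" using hc[OF assms] c by linarith
  have "v \<bullet> v = (norm v)^2" by (simp add: power2_norm_eq_inner)
  then have "(v \<bullet> v) / h v > 0" using assms hv by simp
  with supp_polar_wulff_upper[OF assms, of v] show ?thesis by linarith
qed

end

section \<open>Faces and the singular set\<close>

definition face :: "'a::euclidean_space set \<Rightarrow> 'a \<Rightarrow> 'a set" where
  "face K v = {y \<in> K. y \<bullet> v = supp K v}"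

definition Tset :: "'a::euclidean_space set \<Rightarrow> 'a \<Rightarrow> 'a set" where
  "Tset K b = {v. \<exists>y1\<in>face K v. \<exists>y2\<in>face K v. y1 \<bullet> b < y2 \<bullet> b}"

definition Nset :: "'a::euclidean_space set \<Rightarrow> 'a set" where
  "Nset K = (\<Union>b\<in>Basis. Tset K b)"

lemma supp_scale:
  fixes K :: "'a::euclidean_space set"
  assumes "K \<subseteq> cball 0 R" "K \<noteq> {}" "a > 0"
  shows "supp K (a *\<^sub>R v) = a * supp K v"
proof (rule order.antisym)
  show "supp K (a *\<^sub>R v) \<le> a * supp K v"
  proof (rule supp_least[OF assms(2)])
    fix y assume y: "y \<in> K"
    have "y \<bullet> v \<le> supp K v" by (rule supp_upper[OF assms(1) y])
    then have "a * (y \<bullet> v) \<le> a * supp K v" using assms(3) by (intro mult_left_mono) auto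
    then show "y \<bullet> (a *\<^sub>R v) \<le> a * supp K v" by simp
  qed
  have "supp K v \<le> supp K (a *\<^sub>R v) / a"
  proof (rule supp_least[OF assms(2)])
    fix y assume y: "y \<in> K"
    have "y \<bullet> (a *\<^sub>R v) \<le> supp K (a *\<^sub>R v)" by (rule supp_upper[OF assms(1) y])
    then have "a * (y \<bullet> v) \<le> supp K (a *\<^sub>R v)" by simp
    then show "y \<bullet> v \<le> supp K (a *\<^sub>R v) / a" using assms(3) by (simp add: pos_le_divide_eq mult.commute)
  qed
  then show "a * supp K v \<le> supp K (a *\<^sub>R v)" using assms(3) by (simp add: pos_le_divide_eq mult.commute)
qed

context cbody
begin

lemma face_ne: "face K v \<noteq> {}"
proof -
  obtain y where "y \<in> K" "supp K v = y \<bullet> v"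
    using supp_attained[OF cb_compact[OF cb] cb_nonempty[OF cb], of v] by blast
  then have "y \<in> face K v" by (simp add: face_def)
  then show ?thesis by blast
qed

lemma face_sub: "face K v \<subseteq> K" by (auto simp: face_def)

lemma face_scale: assumes "a > 0" shows "face K (a *\<^sub>R v) = face K v"
proof -
  have "supp K (a *\<^sub>R v) = a * supp K v" by (rule supp_scale[OF KR cb_nonempty[OF cb] assms])
  then have "(y \<bullet> (a *\<^sub>R v) = supp K (a *\<^sub>R v)) = (y \<bullet> v = supp K v)" for y using assms by simp
  then show ?thesis by (simp add: face_def)
qed

lemma Tset_scale: "a > 0 \<Longrightarrow> (a *\<^sub>R v \<in> Tset K b) = (v \<in> Tset K b)"
  using face_scale by (simp add: Tset_def)

lemma face_unique:
  assumes "v \<notin> Nset K" "y1 \<in> face K v" "y2 \<in> face K v"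
  shows "y1 = y2"
proof (rule euclidean_eqI)
  fix b :: 'a assume b: "b \<in> Basis"
  have "v \<notin> Tset K b" using assms(1) b by (auto simp: Nset_def)
  show "y1 \<bullet> b = y2 \<bullet> b"
  proof (rule ccontr)
    assume "y1 \<bullet> b \<noteq> y2 \<bullet> b"
    then have "y1 \<bullet> b < y2 \<bullet> b \<or> y2 \<bullet> b < y1 \<bullet> b" by linarith
    then have "v \<in> Tset K b" using assms(2,3) unfolding Tset_def by blast
    then show False using \<open>v \<notin> Tset K b\<close> by blast
  qed
qed

lemma zero_in_Nset: "0 \<in> Nset K"
proof -
  obtain b :: 'a where b: "b \<in> Basis" using nonempty_Basis by blast
  have nb: "norm b = 1" using b by simp
  have "r *\<^sub>R b \<in> K" "(- r) *\<^sub>R b \<in> K" using rK r nb by (auto simp: subset_iff)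
  moreover have "supp K 0 = 0"
  proof (rule order.antisym)
    show "supp K 0 \<le> 0" by (rule supp_least[OF cb_nonempty[OF cb]]) simp
    have "(r *\<^sub>R b) \<bullet> 0 \<le> supp K 0" by (rule supp_upper[OF KR \<open>r *\<^sub>R b \<in> K\<close>])
    then show "0 \<le> supp K 0" by simp
  qed
  ultimately have "r *\<^sub>R b \<in> face K 0" "(- r) *\<^sub>R b \<in> face K 0" by (auto simp: face_def)
  moreover have "((- r) *\<^sub>R b) \<bullet> b < (r *\<^sub>R b) \<bullet> b" using b r by simp
  ultimately have "0 \<in> Tset K b" unfolding Tset_def by blast
  then show ?thesis using b by (auto simp: Nset_def)
qed

lemma Tset_closed_part:
  "closed {v. \<exists>y. y \<in> K \<times> K \<and> (y, v) \<in>
      {(yy, v). fst yy \<bullet> v = supp K v \<and> snd yy \<bullet> v = supp K v \<and> 1 / Suc m \<le> snd yy \<bullet> b - fst yy \<bullet> b}}"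
proof (rule closed_compact_projection)
  show "compact (K \<times> K)" using cb_compact[OF cb] by (intro compact_Times)
  have c1: "continuous_on UNIV (\<lambda>z::(('a \<times> 'a) \<times> 'a). supp K (snd z))"
    by (rule continuous_on_compose2[OF supp_contK continuous_on_snd]) auto
  have "closed ({z::(('a \<times> 'a) \<times> 'a). fst (fst z) \<bullet> snd z = supp K (snd z)} \<inter>
     {z. snd (fst z) \<bullet> snd z = supp K (snd z)} \<inter> {z. 1 / Suc m \<le> snd (fst z) \<bullet> b - fst (fst z) \<bullet> b})"
    by (intro closed_Int closed_Collect_eq closed_Collect_le continuous_intros c1)
  then show "closed {(yy, v). fst yy \<bullet> v = supp K v \<and> snd yy \<bullet> v = supp K v \<and> 1 / Suc m \<le> snd yy \<bullet> b - fst yy \<bullet> b}"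
    by (simp add: case_prod_beta' Collect_conj_eq Int_assoc)
qed

lemma Tset_borel: "Tset K b \<in> sets borel"
proof -
  define P where "P m = {v. \<exists>y. y \<in> K \<times> K \<and> (y, v) \<in>
      {(yy, v). fst yy \<bullet> v = supp K v \<and> snd yy \<bullet> v = supp K v \<and> 1 / Suc m \<le> snd yy \<bullet> b - fst yy \<bullet> b}}" for m :: nat
  have "Tset K b = (\<Union>m. P m)"
  proof (intro equalityI subsetI)
    fix v assume "v \<in> Tset K b"
    then obtain y1 y2 where y: "y1 \<in> face K v" "y2 \<in> face K v" "y1 \<bullet> b < y2 \<bullet> b"
      by (auto simp: Tset_def)
    obtain m :: nat where "inverse (Suc m) < y2 \<bullet> b - y1 \<bullet> b"
      using reals_Archimedean[of "y2 \<bullet> b - y1 \<bullet> b"] y(3) by auto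
    then have "v \<in> P m" using y unfolding P_def face_def
      by (intro CollectI exI[of _ "(y1, y2)"]) (auto simp: inverse_eq_divide)
    then show "v \<in> (\<Union>m. P m)" by blast
  next
    fix v assume "v \<in> (\<Union>m. P m)"
    then obtain m y1 y2 where "y1 \<in> K" "y2 \<in> K" "y1 \<bullet> v = supp K v" "y2 \<bullet> v = supp K v"
      "1 / Suc m \<le> y2 \<bullet> b - y1 \<bullet> b" unfolding P_def by auto
    moreover have "0 < 1 / real (Suc m)" by simp
    ultimately have "y1 \<bullet> b < y2 \<bullet> b" "y1 \<in> face K v" "y2 \<in> face K v"
      by (simp_all only: face_def mem_Collect_eq)
    then show "v \<in> Tset K b" unfolding Tset_def by blast
  qed
  moreover have "P m \<in> sets borel" for m
    unfolding P_def by (rule borel_closed[OF Tset_closed_part])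
  ultimately show ?thesis by auto
qed

lemma Nset_borel: "Nset K \<in> sets borel"
  unfolding Nset_def by (intro sets.countable_UN'' countable_finite[OF finite_Basis]) (auto intro: Tset_borel)

lemma face_mono:
  assumes "y \<in> face K v" "y' \<in> face K (v + d *\<^sub>R b)" "d > 0"
  shows "y \<bullet> b \<le> y' \<bullet> b"
proof -
  have "y' \<bullet> v \<le> y \<bullet> v" using assms(1,2) supp_upperK by (auto simp: face_def)
  moreover have "y \<bullet> (v + d *\<^sub>R b) \<le> y' \<bullet> (v + d *\<^sub>R b)" using assms(1,2) supp_upperK by (auto simp: face_def)
  ultimately have "d * (y \<bullet> b) \<le> d * (y' \<bullet> b)" by (simp add: inner_add_right)
  then show ?thesis using assms(3) by simp
qed

lemma Tset_line_countable: "countable {s::real. x + s *\<^sub>R b \<in> Tset K b}"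
proof -
  let ?C = "{s::real. x + s *\<^sub>R b \<in> Tset K b}"
  define q where "q s = (SOME q. q \<in> \<rat> \<and> (\<exists>y1\<in>face K (x + s *\<^sub>R b). \<exists>y2\<in>face K (x + s *\<^sub>R b).
      y1 \<bullet> b < q \<and> q < y2 \<bullet> b))" for s
  have q: "q s \<in> \<rat> \<and> (\<exists>y1\<in>face K (x + s *\<^sub>R b). \<exists>y2\<in>face K (x + s *\<^sub>R b).
      y1 \<bullet> b < q s \<and> q s < y2 \<bullet> b)" if "s \<in> ?C" for s
  proof -
    from that obtain y1 y2 where y: "y1 \<in> face K (x + s *\<^sub>R b)" "y2 \<in> face K (x + s *\<^sub>R b)" "y1 \<bullet> b < y2 \<bullet> b"
      by (auto simp: Tset_def)
    obtain t where "t \<in> \<rat>" "y1 \<bullet> b < t" "t < y2 \<bullet> b" using Rats_dense_in_real[OF y(3)] by blast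
    then have "\<exists>q. q \<in> \<rat> \<and> (\<exists>y1\<in>face K (x + s *\<^sub>R b). \<exists>y2\<in>face K (x + s *\<^sub>R b). y1 \<bullet> b < q \<and> q < y2 \<bullet> b)"
      using y by blast
    then show ?thesis unfolding q_def by (rule someI_ex)
  qed
  have mono: "q s < q s'" if ss: "s \<in> ?C" and ss': "s' \<in> ?C" and lt: "s < s'" for s s'
  proof -
    obtain y2 where y2: "y2 \<in> face K (x + s *\<^sub>R b)" "q s < y2 \<bullet> b" using q[OF ss] by blast
    obtain y1' where y1': "y1' \<in> face K (x + s' *\<^sub>R b)" "y1' \<bullet> b < q s'" using q[OF ss'] by blast
    have eq: "x + s' *\<^sub>R b = (x + s *\<^sub>R b) + (s' - s) *\<^sub>R b" by (simp add: algebra_simps)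
    have "y1' \<in> face K ((x + s *\<^sub>R b) + (s' - s) *\<^sub>R b)" using y1'(1) unfolding eq .
    from face_mono[OF y2(1) this] lt have "y2 \<bullet> b \<le> y1' \<bullet> b" by simp
    then show ?thesis using y2 y1' by linarith
  qed
  have inj: "inj_on q ?C"
  proof (rule inj_onI)
    fix s s' assume "s \<in> ?C" "s' \<in> ?C" "q s = q s'"
    then show "s = s'" using mono[of s s'] mono[of s' s] by (metis less_irrefl linorder_neqE_linordered_idom)
  qed
  have "q ` ?C \<subseteq> \<rat>" using q by blast
  then have "countable (q ` ?C)" using countable_rat countable_subset by blast
  then show ?thesis using countable_image_inj_on inj by blast
qed

end


lemma lborel_null_lines:
  fixes T :: "'a::euclidean_space set" and e :: 'a
  assumes T: "T \<in> sets borel" and cnt: "\<And>x. countable {s::real. x + s *\<^sub>R e \<in> T}"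
  shows "emeasure lborel T = 0"
proof -
  define g where "g = (\<lambda>z::'a \<times> real. indicator T (fst z + snd z *\<^sub>R e) * indicator {0..1} (snd z) :: ennreal)"
  have gm: "g \<in> borel_measurable (lborel \<Otimes>\<^sub>M lborel)"
    unfolding g_def using T by measurable
  have ps: "pair_sigma_finite (lborel :: 'a measure) (lborel :: real measure)"
    by (simp add: pair_sigma_finite_def lborel.sigma_finite_measure_axioms)
  have 1: "(\<integral>\<^sup>+x. \<integral>\<^sup>+s. g (x, s) \<partial>lborel \<partial>lborel) = 0"
  proof -
    have "(\<integral>\<^sup>+s. g (x, s) \<partial>lborel) = 0" for x
    proof -
      let ?C = "{s::real. x + s *\<^sub>R e \<in> T}"
      have Cs: "?C \<in> sets lborel" by (rule sets.countable[OF _ cnt[of x]]) simp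
      have "(\<integral>\<^sup>+s. g (x, s) \<partial>lborel) \<le> (\<integral>\<^sup>+s. indicator ?C s \<partial>lborel)"
        unfolding g_def by (intro nn_integral_mono) (simp add: indicator_def)
      also have "\<dots> = emeasure lborel ?C" using Cs by (rule nn_integral_indicator)
      also have "\<dots> = 0" using emeasure_lborel_countable[OF cnt[of x]] .
      finally show ?thesis by simp
    qed
    then show ?thesis by simp
  qed
  have 2: "(\<integral>\<^sup>+s. \<integral>\<^sup>+x. g (x, s) \<partial>lborel \<partial>lborel) = emeasure lborel T"
  proof -
    have inner: "(\<integral>\<^sup>+x. g (x, s) \<partial>lborel) = emeasure lborel T * indicator {0..1} s" for s
    proof -
      have m: "(\<lambda>x. indicator T (s *\<^sub>R e + x) :: ennreal) \<in> borel_measurable lborel"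
        using T by measurable
      have "(\<integral>\<^sup>+x. g (x, s) \<partial>lborel) = (\<integral>\<^sup>+x. indicator T (s *\<^sub>R e + x) * indicator {0..1} s \<partial>lborel)"
        unfolding g_def by (simp add: add.commute)
      also have "\<dots> = (\<integral>\<^sup>+x. indicator T (s *\<^sub>R e + x) \<partial>lborel) * indicator {0..1} s"
        by (rule nn_integral_multc[OF m])
      also have "(\<integral>\<^sup>+x. indicator T (s *\<^sub>R e + x) \<partial>lborel) = integral\<^sup>N (distr lborel borel ((+) (s *\<^sub>R e))) (indicator T)"
        using T by (subst nn_integral_distr) auto
      also have "\<dots> = emeasure lborel T" using T by (simp add: lborel_distr_plus)
      finally show ?thesis .
    qed
    have "(\<integral>\<^sup>+s. \<integral>\<^sup>+x. g (x, s) \<partial>lborel \<partial>lborel) = (\<integral>\<^sup>+s. emeasure lborel T * indicator {0..1::real} s \<partial>lborel)"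
      by (intro nn_integral_cong inner)
    also have "\<dots> = emeasure lborel T * emeasure lborel {0..1::real}"
      by (subst nn_integral_cmult_indicator) auto
    finally show ?thesis by simp
  qed
  have "(\<integral>\<^sup>+x. \<integral>\<^sup>+s. g (x, s) \<partial>lborel \<partial>lborel) = (\<integral>\<^sup>+s. \<integral>\<^sup>+x. g (x, s) \<partial>lborel \<partial>lborel)"
    using lborel.nn_integral_fst[OF gm] pair_sigma_finite.nn_integral_snd[OF ps gm] by simp
  with 1 2 show ?thesis by simp
qed

definition Nsph :: "'a::euclidean_space set \<Rightarrow> 'a set" where
  "Nsph K = Nset K \<inter> sphere 0 1"

definition gpt :: "'a::euclidean_space set \<Rightarrow> 'a \<Rightarrow> 'a" where
  "gpt K v = (SOME y. y \<in> face K v)"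

definition fmap :: "'a::euclidean_space set \<Rightarrow> 'a \<Rightarrow> 'a" where
  "fmap K v = (if v \<in> - Nset K then gpt K v /\<^sub>R norm (gpt K v) else (SOME b. b \<in> Basis))"

lemma some_basis: "(SOME b. b \<in> Basis) \<in> (Basis :: 'a::euclidean_space set)"
  using nonempty_Basis by (metis ex_in_conv someI_ex)

lemma sphere_borel_sets: "A \<in> sets sphere_borel \<longleftrightarrow> A \<subseteq> sphere 0 1 \<and> A \<in> sets borel"
  unfolding sphere_borel_def by (subst sets_restrict_space_iff) auto

lemma space_sphere_borel: "space sphere_borel = sphere 0 1"
  by (simp add: sphere_borel_def space_restrict_space)

lemma sets_spherical_lebesgue: "sets spherical_lebesgue = sets sphere_borel"
proof -
  have "sets sphere_borel \<subseteq> Pow (sphere 0 1)"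
    using sets.space_closed[of sphere_borel] by (simp add: space_sphere_borel)
  then have "sets spherical_lebesgue = sigma_sets (sphere 0 1) (sets sphere_borel)"
    unfolding spherical_lebesgue_def by (rule sets_measure_of)
  also have "\<dots> = sets sphere_borel"
    using sets.sigma_sets_eq[of sphere_borel] by (simp add: space_sphere_borel)
  finally show ?thesis .
qed

context cbody
begin

lemma Nset_null: "Nset K \<in> null_sets lborel"
proof -
  have "Tset K b \<in> null_sets lborel" for b
    using Tset_borel lborel_null_lines[OF Tset_borel Tset_line_countable] by (auto simp: null_sets_def)
  then show ?thesis unfolding Nset_def
    by (intro null_sets_UN' countable_finite[OF finite_Basis]) auto
qed

lemma cone_sub: "sphere_cone (Nsph K) \<subseteq> Nset K"
proof
  fix z assume "z \<in> sphere_cone (Nsph K)"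
  then obtain t u where z: "z = t *\<^sub>R u" "0 < t" "u \<in> Nset K" unfolding sphere_cone_def Nsph_def by blast
  then obtain b where "b \<in> Basis" "u \<in> Tset K b" by (auto simp: Nset_def)
  then show "z \<in> Nset K" using z Tset_scale[of t u b] by (auto simp: Nset_def)
qed

lemma Nsph_sets: "Nsph K \<in> sets sphere_borel"
  unfolding sphere_borel_sets Nsph_def using Nset_borel by auto

lemma Nsph_null_sl: "Nsph K \<in> null_sets spherical_lebesgue"
proof -
  have "sphere_cone (Nsph K) \<in> null_sets lebesgue"
    using null_sets_completion_subset[OF cone_sub null_sets_completionI[OF Nset_null]] .
  then have 0: "emeasure lebesgue (sphere_cone (Nsph K)) = 0" by auto
  have "emeasure spherical_lebesgue (Nsph K) = 0"
    unfolding spherical_lebesgue_def emeasure_measure_of_conv by (simp add: 0)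
  moreover have "Nsph K \<in> sets spherical_lebesgue" using Nsph_sets by (simp add: sets_spherical_lebesgue)
  ultimately show ?thesis by auto
qed

lemma Nsph_null:
  assumes "absolutely_continuous spherical_lebesgue M"
  shows "Nsph K \<in> null_sets M"
  using assms Nsph_null_sl unfolding absolutely_continuous_def by blast

lemma gpt_face: "gpt K v \<in> face K v"
  unfolding gpt_def using face_ne by (metis ex_in_conv someI_ex)

lemma gpt_K: "gpt K v \<in> K" using gpt_face face_sub by blast

lemma gpt_nz: assumes "v \<notin> Nset K" shows "gpt K v \<noteq> 0"
proof -
  have "v \<noteq> 0" using assms zero_in_Nset by auto
  then have "r * norm v > 0" using r by simp
  then have "supp K v > 0" using supp_posK[OF \<open>v \<noteq> 0\<close>] by linarith
  moreover have "gpt K v \<bullet> v = supp K v" using gpt_face by (simp add: face_def)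
  ultimately show ?thesis by auto
qed

lemma gpt_cont: "continuous_on (- Nset K) (gpt K)"
proof -
  have fim: "gpt K \<in> - Nset K \<rightarrow> K" using gpt_K by blast
  have eq: "(\<lambda>x. (x, gpt K x)) ` (- Nset K) = ((- Nset K) \<times> K) \<inter> {z. snd z \<bullet> fst z = supp K (fst z)}"
  proof (intro equalityI subsetI)
    fix z assume "z \<in> (\<lambda>x. (x, gpt K x)) ` (- Nset K)"
    then show "z \<in> ((- Nset K) \<times> K) \<inter> {z. snd z \<bullet> fst z = supp K (fst z)}"
      using gpt_face by (auto simp: face_def)
  next
    fix z assume z: "z \<in> ((- Nset K) \<times> K) \<inter> {z. snd z \<bullet> fst z = supp K (fst z)}"
    then have "snd z \<in> face K (fst z)" by (auto simp: face_def)
    then have "snd z = gpt K (fst z)" using face_unique[OF _ _ gpt_face] z by auto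
    then show "z \<in> (\<lambda>x. (x, gpt K x)) ` (- Nset K)" using z by (auto intro!: image_eqI[of _ _ "fst z"] prod_eqI)
  qed
  have c1: "continuous_on UNIV (\<lambda>z::('a \<times> 'a). supp K (fst z))"
    by (rule continuous_on_compose2[OF supp_contK continuous_on_fst]) auto
  have "closed {z::('a \<times> 'a). snd z \<bullet> fst z = supp K (fst z)}"
    by (intro closed_Collect_eq continuous_intros c1)
  then have "closedin (top_of_set ((- Nset K) \<times> K)) ((\<lambda>x. (x, gpt K x)) ` (- Nset K))"
    unfolding eq by (rule closedin_closed_Int)
  then show ?thesis using continuous_closed_graph_eq[OF cb_compact[OF cb] fim] by blast
qed

lemma fmap_cont: "continuous_on (- Nset K) (\<lambda>v. gpt K v /\<^sub>R norm (gpt K v))"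
  using gpt_nz by (intro continuous_intros gpt_cont) auto

lemma fmap_borel: "fmap K \<in> borel_measurable borel"
proof -
  have "(\<lambda>v. if v \<in> - Nset K then gpt K v /\<^sub>R norm (gpt K v) else (SOME b. b \<in> Basis)) \<in> borel_measurable borel"
    using Nset_borel by (intro borel_measurable_continuous_on_if fmap_cont continuous_on_const) auto
  then show ?thesis unfolding fmap_def .
qed

lemma fmap_S: "fmap K v \<in> sphere 0 1"
  using gpt_nz[of v] some_basis by (auto simp: fmap_def)

lemma fmap_meas: "fmap K \<in> sphere_borel \<rightarrow>\<^sub>M sphere_borel"
  unfolding sphere_borel_def using fmap_S
  by (intro measurable_restrict_space3[OF fmap_borel]) auto

lemma phi_le: "u \<in> sphere 0 1 \<Longrightarrow> (radial K u *\<^sub>R u) \<bullet> v \<le> supp K v"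
  using supp_upperK[OF radial_mem] by blast

lemma key:
  assumes v: "v \<notin> Nset K" and u: "u \<in> sphere 0 1"
  shows "(radial K u *\<^sub>R u) \<bullet> v = supp K v \<longleftrightarrow> u = fmap K v"
proof
  assume eq: "(radial K u *\<^sub>R u) \<bullet> v = supp K v"
  then have "radial K u *\<^sub>R u \<in> face K v" using radial_mem[OF u] by (auto simp: face_def)
  then have g: "radial K u *\<^sub>R u = gpt K v" using face_unique[OF v _ gpt_face] by blast
  have nn: "norm (radial K u *\<^sub>R u) = radial K u" using radial_pos[OF u] u by simp
  have ng: "norm (gpt K v) = radial K u" using nn g by metis
  have "fmap K v = gpt K v /\<^sub>R norm (gpt K v)" using v by (simp add: fmap_def)
  then have "fmap K v = (radial K u *\<^sub>R u) /\<^sub>R radial K u" using g ng by metis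
  then show "u = fmap K v" using radial_pos[OF u] by simp
next
  assume uf: "u = fmap K v"
  let ?g = "gpt K v"
  have gnz: "?g \<noteq> 0" using gpt_nz[OF v] .
  have ngp: "norm ?g > 0" using gnz by simp
  have u': "u = ?g /\<^sub>R norm ?g" using uf v by (simp add: fmap_def)
  have le: "norm ?g \<le> radial K u" using radial_of_point[OF gpt_K gnz] unfolding u'[symmetric] .
  have gv: "?g \<bullet> v = supp K v" using gpt_face by (simp add: face_def)
  have "v \<noteq> 0" using v zero_in_Nset by auto
  then have "r * norm v > 0" using r by simp
  then have sp: "supp K v > 0" using supp_posK[OF \<open>v \<noteq> 0\<close>] by linarith
  have uv_eq: "u \<bullet> v = supp K v / norm ?g" unfolding u' using gv by (simp add: divide_inverse_commute)
  have uv: "u \<bullet> v > 0" unfolding uv_eq using sp ngp by simp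
  have "(radial K u *\<^sub>R u) \<bullet> v = radial K u * (u \<bullet> v)" by simp
  also have "\<dots> \<ge> norm ?g * (u \<bullet> v)" using le uv by (simp add: mult_right_mono)
  also have "norm ?g * (u \<bullet> v) = supp K v" unfolding uv_eq using ngp by simp
  finally show "(radial K u *\<^sub>R u) \<bullet> v = supp K v" using phi_le[OF u, of v] by linarith
qed

lemma gauss_eq:
  assumes sM: "sets M = sets sphere_borel" and ac: "absolutely_continuous spherical_lebesgue M"
  shows "gauss_image_measure M K = distr M sphere_borel (fmap K)"
proof -
  let ?G = "distr M sphere_borel (fmap K)"
  have fm: "fmap K \<in> M \<rightarrow>\<^sub>M sphere_borel"
    using fmap_meas measurable_cong_sets[OF sM refl] by blast
  have spM: "space M = sphere 0 1" using sets_eq_imp_space_eq[OF sM] space_sphere_borel by simp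
  have N: "Nsph K \<in> null_sets M" using Nsph_null[OF ac] .
  have eqm: "emeasure (completion M) (radial_gauss_image K \<omega>) = emeasure ?G \<omega>" if w: "\<omega> \<in> sets M" for \<omega>
  proof -
    let ?A = "radial_gauss_image K \<omega>"
    let ?B = "fmap K -` \<omega> \<inter> space M"
    have wS: "\<omega> \<subseteq> sphere 0 1" using sets.sets_into_space[OF w] spM by simp
    have B: "?B \<in> sets M" using measurable_sets[OF fm, of \<omega>] w sM by simp
    have AN: "?A - Nsph K = ?B - Nsph K"
    proof (intro equalityI subsetI)
      fix v assume "v \<in> ?A - Nsph K"
      then obtain u where "v \<in> sphere 0 1" "u \<in> \<omega>" "(radial K u *\<^sub>R u) \<bullet> v = supp K v" "v \<notin> Nsph K"
        unfolding radial_gauss_image_def by blast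
      moreover have "v \<notin> Nset K" using calculation by (auto simp: Nsph_def)
      ultimately show "v \<in> ?B - Nsph K" using key wS spM by blast
    next
      fix v assume v: "v \<in> ?B - Nsph K"
      then have vS: "v \<in> sphere 0 1" using spM by auto
      then have vN: "v \<notin> Nset K" using v by (auto simp: Nsph_def)
      have "fmap K v \<in> \<omega>" using v by auto
      moreover have "(radial K (fmap K v) *\<^sub>R fmap K v) \<bullet> v = supp K v" using key[OF vN fmap_S] by simp
      ultimately show "v \<in> ?A - Nsph K" using vS v unfolding radial_gauss_image_def by blast
    qed
    have A_eq: "?A = (?B - Nsph K) \<union> (?A \<inter> Nsph K)" using AN by blast
    have BN: "?B - Nsph K \<in> sets M" using B N by auto
    have Ac: "?A \<in> sets (completion M)"
      by (rule sets_completionI[OF A_eq _ N BN]) auto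
    have BNs: "(?B - Nsph K) \<union> Nsph K \<in> sets M" using BN N by (intro sets.Un) auto
    then have BNN: "(?B - Nsph K) \<union> Nsph K \<in> sets (completion M)" by (rule sets_completionI_sets)
    have "emeasure (completion M) ?A \<le> emeasure (completion M) ((?B - Nsph K) \<union> Nsph K)"
      by (rule emeasure_mono[OF _ BNN]) (use A_eq in blast)
    also have "\<dots> = emeasure M ((?B - Nsph K) \<union> Nsph K)"
      by (simp only: emeasure_completion[OF BNN] main_part[OF BNs])
    also have "\<dots> = emeasure M (?B - Nsph K)" using emeasure_Un_null_set[OF BN N] .
    finally have le: "emeasure (completion M) ?A \<le> emeasure M (?B - Nsph K)" .
    have "emeasure M (?B - Nsph K) = emeasure (completion M) (?B - Nsph K)"
      by (simp only: emeasure_completion[OF sets_completionI_sets[OF BN]] main_part[OF BN])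
    also have "\<dots> \<le> emeasure (completion M) ?A" using A_eq Ac by (intro emeasure_mono) auto
    finally have ge: "emeasure M (?B - Nsph K) \<le> emeasure (completion M) ?A" .
    have "emeasure M (?B - Nsph K) = emeasure M ?B" using emeasure_Diff_null_set[OF N B] .
    also have "\<dots> = emeasure ?G \<omega>" using emeasure_distr[OF fm, of \<omega>] w sM by simp
    finally show ?thesis using le ge by simp
  qed
  have "gauss_image_measure M K = measure_of (space M) (sets M) (emeasure ?G)"
    unfolding gauss_image_measure_def
    by (rule measure_of_eq[OF sets.space_closed]) (simp add: sets.sigma_sets_eq eqm)
  also have "\<dots> = measure_of (space ?G) (sets ?G) (emeasure ?G)"
    using sM spM by (simp add: space_sphere_borel)
  also have "\<dots> = ?G" by (rule measure_of_of_measure)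
  finally show ?thesis .
qed

end


lemma abs_mult_le_bound:
  fixes t a B :: real
  assumes "\<bar>a\<bar> \<le> B"
  shows "t * a \<le> \<bar>t\<bar> * B" and "- (\<bar>t\<bar> * B) \<le> t * a"
proof -
  have "\<bar>t * a\<bar> \<le> \<bar>t\<bar> * B" using assms by (simp add: abs_mult mult_left_mono)
  then show "t * a \<le> \<bar>t\<bar> * B" "- (\<bar>t\<bar> * B) \<le> t * a" by linarith+
qed

lemma envelope_bound:
  fixes F :: "real \<Rightarrow> 'x \<Rightarrow> real" and Mf :: "real \<Rightarrow> real" and G :: "'x \<Rightarrow> real"
  assumes B: "\<And>x. x \<in> X \<Longrightarrow> \<bar>G x\<bar> \<le> B"
    and x0: "x0 \<in> X" and d0: "0 < \<delta>"
    and upper: "\<And>t x. \<bar>t\<bar> < \<delta> \<Longrightarrow> x \<in> X \<Longrightarrow> F t x \<le> Mf t"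
    and least: "\<And>t U. \<bar>t\<bar> < \<delta> \<Longrightarrow> (\<And>x. x \<in> X \<Longrightarrow> F t x \<le> U) \<Longrightarrow> Mf t \<le> U"
    and expand: "\<And>t x. \<bar>t\<bar> < \<delta> \<Longrightarrow> x \<in> X \<Longrightarrow> \<bar>F t x - F 0 x - t * G x\<bar> \<le> C * t\<^sup>2"
    and max0: "F 0 x0 = Mf 0"
    and t: "\<bar>t\<bar> < \<delta>"
  shows "\<bar>Mf t - Mf 0\<bar> \<le> \<bar>t\<bar> * B + C * t\<^sup>2"
proof -
  have lo: "Mf 0 - \<bar>t\<bar> * B - C * t\<^sup>2 \<le> Mf t"
  proof -
    have "F t x0 \<le> Mf t" using upper[OF t x0] .
    moreover have "\<bar>F t x0 - F 0 x0 - t * G x0\<bar> \<le> C * t\<^sup>2" using expand[OF t x0] .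
    moreover have "- (\<bar>t\<bar> * B) \<le> t * G x0" using abs_mult_le_bound(2)[OF B[OF x0]] .
    ultimately show ?thesis using max0 by linarith
  qed
  have hi: "Mf t \<le> Mf 0 + \<bar>t\<bar> * B + C * t\<^sup>2"
  proof (rule least[OF t])
    fix x assume x: "x \<in> X"
    have "F 0 x \<le> Mf 0" using upper[OF _ x] d0 by simp
    moreover have "\<bar>F t x - F 0 x - t * G x\<bar> \<le> C * t\<^sup>2" using expand[OF t x] .
    moreover have "t * G x \<le> \<bar>t\<bar> * B" using abs_mult_le_bound(1)[OF B[OF x]] .
    ultimately show "F t x \<le> Mf 0 + \<bar>t\<bar> * B + C * t\<^sup>2" by linarith
  qed
  from lo hi show ?thesis by linarith
qed

lemma envelope_lim:
  fixes F :: "real \<Rightarrow> 'x \<Rightarrow> real" and Mf :: "real \<Rightarrow> real" and G :: "'x \<Rightarrow> real"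
  assumes B: "\<And>x. x \<in> X \<Longrightarrow> \<bar>G x\<bar> \<le> B"
    and x0: "x0 \<in> X" and d0: "0 < \<delta>" and C: "0 \<le> C"
    and upper: "\<And>t x. \<bar>t\<bar> < \<delta> \<Longrightarrow> x \<in> X \<Longrightarrow> F t x \<le> Mf t"
    and least: "\<And>t U. \<bar>t\<bar> < \<delta> \<Longrightarrow> (\<And>x. x \<in> X \<Longrightarrow> F t x \<le> U) \<Longrightarrow> Mf t \<le> U"
    and expand: "\<And>t x. \<bar>t\<bar> < \<delta> \<Longrightarrow> x \<in> X \<Longrightarrow> \<bar>F t x - F 0 x - t * G x\<bar> \<le> C * t\<^sup>2"
    and max0: "F 0 x0 = Mf 0"
    and near: "\<And>\<epsilon>. \<epsilon> > 0 \<Longrightarrow> \<exists>\<eta>>0. \<forall>x\<in>X. Mf 0 - \<eta> \<le> F 0 x \<longrightarrow> \<bar>G x - G x0\<bar> \<le> \<epsilon>"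
  shows "((\<lambda>t. (Mf t - Mf 0) / t) \<longlongrightarrow> G x0) (at 0)"
  unfolding LIM_eq
proof (intro allI impI)
  fix r :: real assume r: "r > 0"
  obtain \<eta> where eta: "\<eta> > 0" "\<And>x. x \<in> X \<Longrightarrow> Mf 0 - \<eta> \<le> F 0 x \<Longrightarrow> \<bar>G x - G x0\<bar> \<le> r / 2"
    using near[of "r/2"] r by auto
  have B0: "0 \<le> B" using B[OF x0] by linarith
  define s where "s = min \<delta> (min (\<eta> / (2 * B + 1)) (r / (2 * C + 1)))"
  have s0: "s > 0" using d0 eta B0 C r by (simp add: s_def)
  show "\<exists>s>0. \<forall>t. t \<noteq> 0 \<and> norm (t - 0) < s \<longrightarrow> norm ((Mf t - Mf 0) / t - G x0) < r"
  proof (intro exI[of _ s] conjI allI impI s0)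
    fix t :: real assume tt: "t \<noteq> 0 \<and> norm (t - 0) < s"
    then have t0: "t \<noteq> 0" and ts: "\<bar>t\<bar> < s" by auto
    have td: "\<bar>t\<bar> < \<delta>" using ts by (simp add: s_def)
    have te: "\<bar>t\<bar> * (2 * B + 1) < \<eta>"
    proof -
      have "\<bar>t\<bar> < \<eta> / (2 * B + 1)" using ts by (simp add: s_def)
      then show ?thesis using B0 by (simp add: pos_less_divide_eq)
    qed
    have tr: "\<bar>t\<bar> * (2 * C + 1) < r"
    proof -
      have "\<bar>t\<bar> < r / (2 * C + 1)" using ts by (simp add: s_def)
      then show ?thesis using C by (simp add: pos_less_divide_eq)
    qed
    have lo: "Mf 0 + t * G x0 - C * t\<^sup>2 \<le> Mf t"
    proof -
      have "F t x0 \<le> Mf t" using upper[OF td x0] .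
      moreover have "\<bar>F t x0 - F 0 x0 - t * G x0\<bar> \<le> C * t\<^sup>2" using expand[OF td x0] .
      ultimately show ?thesis using max0 by linarith
    qed
    have hi: "Mf t \<le> Mf 0 + t * G x0 + \<bar>t\<bar> * (r/2) + C * t\<^sup>2"
    proof (rule least[OF td])
      fix x assume x: "x \<in> X"
      have F0: "F 0 x \<le> Mf 0" using upper[OF _ x] d0 by simp
      have ex: "\<bar>F t x - F 0 x - t * G x\<bar> \<le> C * t\<^sup>2" using expand[OF td x] .
      show "F t x \<le> Mf 0 + t * G x0 + \<bar>t\<bar> * (r/2) + C * t\<^sup>2"
      proof (cases "Mf 0 - \<eta> \<le> F 0 x")
        case True
        have "\<bar>G x - G x0\<bar> \<le> r / 2" using eta(2)[OF x True] .
        then have "t * (G x - G x0) \<le> \<bar>t\<bar> * (r/2)" by (rule abs_mult_le_bound(1))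
        then show ?thesis using F0 ex by (simp add: algebra_simps)
      next
        case False
        have "t * G x \<le> \<bar>t\<bar> * B" using abs_mult_le_bound(1)[OF B[OF x]] .
        moreover have "- (\<bar>t\<bar> * B) \<le> t * G x0" using abs_mult_le_bound(2)[OF B[OF x0]] .
        moreover have "0 \<le> \<bar>t\<bar> * (r/2)" using r by simp
        moreover have "\<bar>t\<bar> * (2 * B) \<le> \<eta>" using te by (simp add: algebra_simps)
        ultimately show ?thesis using False ex by (simp add: algebra_simps)
      qed
    qed
    have main: "\<bar>Mf t - Mf 0 - t * G x0\<bar> \<le> \<bar>t\<bar> * (r/2) + C * t\<^sup>2"
    proof -
      have "0 \<le> \<bar>t\<bar> * (r/2)" using r by simp
      then show ?thesis using lo hi unfolding abs_le_iff by linarith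
    qed
    have eq: "(Mf t - Mf 0) / t - G x0 = (Mf t - Mf 0 - t * G x0) / t" using t0 by (simp add: field_simps)
    have "\<bar>(Mf t - Mf 0) / t - G x0\<bar> = \<bar>Mf t - Mf 0 - t * G x0\<bar> / \<bar>t\<bar>" by (simp add: eq abs_divide)
    also have "\<dots> \<le> (\<bar>t\<bar> * (r/2) + C * t\<^sup>2) / \<bar>t\<bar>" using main t0 by (simp add: divide_right_mono)
    also have "\<dots> = r/2 + C * \<bar>t\<bar>" using t0 by (simp add: field_simps power2_eq_square abs_mult_self_eq)
    also have "\<dots> < r"
    proof -
      have "C * \<bar>t\<bar> \<le> \<bar>t\<bar> * (2 * C + 1) / 2" using C by (simp add: algebra_simps)
      then show ?thesis using tr by linarith
    qed
    finally show "norm ((Mf t - Mf 0) / t - G x0) < r" by simp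
  qed
qed


context cbody
begin

lemma supp_posS: "v \<in> sphere 0 1 \<Longrightarrow> supp K v > 0"
proof -
  assume v: "v \<in> sphere 0 1"
  then have "v \<noteq> 0" by auto
  then have "r * norm v > 0" using r by simp
  then show ?thesis using supp_posK[OF \<open>v \<noteq> 0\<close>] by linarith
qed

lemma near_lemma:
  fixes g :: "'a \<Rightarrow> real"
  assumes vS: "v \<in> sphere 0 1" and vN: "v \<notin> Nset K" and gc: "continuous_on (sphere 0 1) g" and e: "\<epsilon> > 0"
  shows "\<exists>\<eta>>0. \<forall>x\<in>sphere 0 1. 0 < x \<bullet> v \<longrightarrow> ln (supp K v) - \<eta> \<le> ln (radial K x * (x \<bullet> v))
           \<longrightarrow> \<bar>g x - g (fmap K v)\<bar> \<le> \<epsilon>"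
proof -
  let ?S = "sphere (0::'a) 1"
  let ?x0 = "fmap K v"
  define Z where "Z = ?S \<inter> (\<lambda>x. \<bar>g x - g ?x0\<bar>) -` {\<epsilon>..}"
  have cZ: "closedin (top_of_set ?S) Z" unfolding Z_def
    by (intro continuous_closedin_preimage continuous_intros gc)
  have kZ: "compact Z" using closedin_compact[OF compact_sphere cZ] .
  have sp: "supp K v > 0" using supp_posS[OF vS] .
  show ?thesis
  proof (cases "Z = {}")
    case True
    show ?thesis
    proof (intro exI[of _ 1] conjI ballI impI)
      fix x assume "x \<in> ?S"
      then have "x \<notin> Z" using True by auto
      then show "\<bar>g x - g ?x0\<bar> \<le> \<epsilon>" using \<open>x \<in> ?S\<close> by (auto simp: Z_def)
    qed simp
  next
    case False
    let ?phi = "\<lambda>x. radial K x * (x \<bullet> v)"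
    have "continuous_on ?S ?phi" by (intro continuous_intros radial_cont)
    then have "continuous_on Z ?phi" by (rule continuous_on_subset) (auto simp: Z_def)
    from continuous_attains_sup[OF kZ False this]
    obtain z where z: "z \<in> Z" "\<And>x. x \<in> Z \<Longrightarrow> ?phi x \<le> ?phi z" by blast
    have zS: "z \<in> ?S" and zg: "\<epsilon> \<le> \<bar>g z - g ?x0\<bar>" using z(1) by (auto simp: Z_def)
    have "z \<noteq> ?x0" using zg e by auto
    then have "(radial K z *\<^sub>R z) \<bullet> v \<noteq> supp K v" using key[OF vN zS] by simp
    moreover have "(radial K z *\<^sub>R z) \<bullet> v \<le> supp K v" using phi_le[OF zS] .
    ultimately have phiz: "?phi z < supp K v" by simp
    define c' where "c' = max (?phi z) (supp K v / 2)"
    have c'pos: "0 < c'" using sp by (simp add: c'_def)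
    have c'lt: "c' < supp K v" using phiz sp by (simp add: c'_def)
    define c'' where "c'' = (c' + supp K v) / 2"
    have c''pos: "0 < c''" using c'pos sp by (simp add: c''_def)
    have c''lt: "c'' < supp K v" "c' < c''" using c'lt by (simp_all add: c''_def)
    define \<eta> where "\<eta> = ln (supp K v) - ln c''"
    have eta: "\<eta> > 0" using c''pos c''lt by (simp add: \<eta>_def)
    show ?thesis
    proof (intro exI[of _ \<eta>] conjI ballI impI eta)
      fix x assume xS: "x \<in> ?S" and xv: "0 < x \<bullet> v" and le: "ln (supp K v) - \<eta> \<le> ln (?phi x)"
      show "\<bar>g x - g ?x0\<bar> \<le> \<epsilon>"
      proof (rule ccontr)
        assume "\<not> \<bar>g x - g ?x0\<bar> \<le> \<epsilon>"
        then have "x \<in> Z" using xS by (auto simp: Z_def)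
        then have "?phi x \<le> ?phi z" by (rule z(2))
        then have "?phi x \<le> c'" by (simp add: c'_def)
        moreover have px: "0 < ?phi x" using radial_pos[OF xS] xv by simp
        moreover have "ln c'' \<le> ln (?phi x)" using le by (simp add: \<eta>_def)
        then have "c'' \<le> ?phi x" using px c''pos by simp
        ultimately show False using c''lt by linarith
      qed
    qed
  qed
qed

lemma main_deriv:
  fixes M :: "'a measure" and h :: "real \<Rightarrow> 'a \<Rightarrow> real" and g :: "'a \<Rightarrow> real"
  assumes sM: "sets M = sets sphere_borel" and fin: "finite_measure M"
    and ac: "absolutely_continuous spherical_lebesgue M"
    and d0: "0 < \<delta>" and C: "0 \<le> C"
    and hpos: "\<And>t x. \<bar>t\<bar> < \<delta> \<Longrightarrow> x \<in> sphere 0 1 \<Longrightarrow> 0 < h t x"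
    and hexp: "\<And>t x. \<bar>t\<bar> < \<delta> \<Longrightarrow> x \<in> sphere 0 1 \<Longrightarrow>
                  \<bar>ln (h t x) + ln (radial K x) - t * g x\<bar> \<le> C * t\<^sup>2"
    and gc: "continuous_on (sphere 0 1) g"
  shows "((\<lambda>t. gen_entropy M (polar (wulff (sphere 0 1) (h t)))) has_real_derivative
           (\<integral>v. g (fmap K v) \<partial>M)) (at 0)"
proof -
  let ?S = "sphere (0::'a) 1"
  have Sne: "?S \<noteq> {}"
  proof -
    obtain b :: 'a where "b \<in> Basis" using nonempty_Basis by blast
    then have "b \<in> ?S" by simp
    then show ?thesis by blast
  qed
  obtain Bg where Bg: "\<And>x. x \<in> ?S \<Longrightarrow> \<bar>g x\<bar> \<le> Bg"
  proof -
    have "bounded (g ` ?S)" by (rule compact_imp_bounded[OF compact_continuous_image[OF gc compact_sphere]])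
    then obtain b where "\<forall>y\<in>g ` ?S. norm y \<le> b" unfolding bounded_iff by blast
    then show ?thesis using that[of b] by auto
  qed
  have Bg0: "0 \<le> Bg" using Bg Sne by (meson abs_ge_zero equals0I order_trans)
  have spM: "space M = ?S" using sets_eq_imp_space_eq[OF sM] space_sphere_borel by simp
  define c0 where "c0 = exp (- (ln R + \<delta> * Bg + C * \<delta>\<^sup>2))"
  have c0: "c0 > 0" by (simp add: c0_def)
  have hlow: "c0 \<le> h t x" if t: "\<bar>t\<bar> < \<delta>" and x: "x \<in> ?S" for t x
  proof -
    have e1: "\<bar>ln (h t x) + ln (radial K x) - t * g x\<bar> \<le> C * t\<^sup>2" using hexp[OF t x] .
    have "ln (radial K x) \<le> ln R" using radial_le_R[OF x] radial_pos[OF x] by simp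
    moreover have "- (\<bar>t\<bar> * Bg) \<le> t * g x" using abs_mult_le_bound(2)[OF Bg[OF x]] .
    moreover have "\<bar>t\<bar> * Bg \<le> \<delta> * Bg" using t Bg0 by (simp add: mult_right_mono)
    moreover have "C * t\<^sup>2 \<le> C * \<delta>\<^sup>2"
    proof -
      have "\<bar>t\<bar>\<^sup>2 \<le> \<delta>\<^sup>2" by (rule power_mono) (use t in auto)
      then have "t\<^sup>2 \<le> \<delta>\<^sup>2" by simp
      then show ?thesis using C by (simp add: mult_left_mono)
    qed
    ultimately have "- (ln R + \<delta> * Bg + C * \<delta>\<^sup>2) \<le> ln (h t x)" using e1 by linarith
    then have "c0 \<le> exp (ln (h t x))" unfolding c0_def by simp
    then show ?thesis using hpos[OF t x] by simp
  qed
  have wp: "wulffpos (h t) c0" if "\<bar>t\<bar> < \<delta>" for t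
    using c0 hlow[OF that] by (intro wulffpos.intro) auto
  define Mf where "Mf t v = ln (supp (polar (wulff ?S (h t))) v)" for t v
  have d00: "\<bar>0::real\<bar> < \<delta>" using d0 by simp
  have h0: "h 0 x = 1 / radial K x" if x: "x \<in> ?S" for x
  proof -
    have "\<bar>ln (h 0 x) + ln (radial K x)\<bar> \<le> 0" using hexp[OF d00 x] by simp
    then have "ln (h 0 x) = - ln (radial K x)" by linarith
    then have "exp (ln (h 0 x)) = exp (- ln (radial K x))" by simp
    then show ?thesis using hpos[OF d00 x] radial_pos[OF x] by (simp add: exp_minus inverse_eq_divide)
  qed
  have supp0: "supp (polar (wulff ?S (h 0))) v = supp K v" if vS: "v \<in> ?S" and vN: "v \<notin> Nset K" for v
  proof (rule order.antisym)
    show "supp (polar (wulff ?S (h 0))) v \<le> supp K v"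
    proof (rule wulffpos.supp_polar_wulff_least[OF wp[OF d00]])
      fix x assume x: "x \<in> ?S"
      have "(x \<bullet> v) / h 0 x = (radial K x *\<^sub>R x) \<bullet> v" using h0[OF x] by simp
      then show "(x \<bullet> v) / h 0 x \<le> supp K v" using phi_le[OF x] by simp
    qed
    have "(fmap K v \<bullet> v) / h 0 (fmap K v) = (radial K (fmap K v) *\<^sub>R fmap K v) \<bullet> v"
      using h0[OF fmap_S] by simp
    also have "\<dots> = supp K v" using key[OF vN fmap_S] by simp
    finally show "supp K v \<le> supp (polar (wulff ?S (h 0))) v"
      using wulffpos.supp_polar_wulff_upper[OF wp[OF d00] fmap_S[of v], where v = v] by linarith
  qed
  have env: "((\<lambda>t. (Mf t v - Mf 0 v) / t) \<longlongrightarrow> - g (fmap K v)) (at 0) \<and>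
      (\<forall>t. \<bar>t\<bar> < \<delta> \<longrightarrow> \<bar>Mf t v - Mf 0 v\<bar> \<le> \<bar>t\<bar> * Bg + C * t\<^sup>2)"
    if vS: "v \<in> ?S" and vN: "v \<notin> Nset K" for v
  proof -
    define X where "X = {x \<in> ?S. 0 < x \<bullet> v}"
    define F where "F t x = ln (x \<bullet> v) - ln (h t x)" for t x
    define G where "G x = - g x" for x
    let ?x0 = "fmap K v"
    have sp: "supp K v > 0" using supp_posS[OF vS] .
    have kx0: "radial K ?x0 * (?x0 \<bullet> v) = supp K v" using key[OF vN fmap_S] by simp
    have x0X: "?x0 \<in> X"
    proof -
      have "0 < radial K ?x0 * (?x0 \<bullet> v)" using kx0 sp by simp
      then have "0 < ?x0 \<bullet> v" by (rule zero_less_mult_pos) (rule radial_pos[OF fmap_S])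
      then show ?thesis using fmap_S by (simp add: X_def)
    qed
    have GB: "\<bar>G x\<bar> \<le> Bg" if "x \<in> X" for x using Bg that by (auto simp: G_def X_def)
    have upper: "F t x \<le> Mf t v" if t: "\<bar>t\<bar> < \<delta>" and x: "x \<in> X" for t x
    proof -
      have xS: "x \<in> ?S" and xv: "0 < x \<bullet> v" using x by (auto simp: X_def)
      have hp: "0 < h t x" using hpos[OF t xS] .
      have "F t x = ln ((x \<bullet> v) / h t x)" using xv hp by (simp add: F_def ln_div)
      also have "\<dots> \<le> Mf t v" unfolding Mf_def
      proof -
        have a: "0 < (x \<bullet> v) / h t x" using xv hp by simp
        have b: "(x \<bullet> v) / h t x \<le> supp (polar (wulff ?S (h t))) v"
          using wulffpos.supp_polar_wulff_upper[OF wp[OF t] xS, where v = v] .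
        then have c: "0 < supp (polar (wulff ?S (h t))) v" using a by linarith
        show "ln ((x \<bullet> v) / h t x) \<le> ln (supp (polar (wulff ?S (h t))) v)"
          using ln_le_cancel_iff[OF a c] b by simp
      qed
      finally show ?thesis .
    qed
    have least: "Mf t v \<le> U" if t: "\<bar>t\<bar> < \<delta>" and U: "\<And>x. x \<in> X \<Longrightarrow> F t x \<le> U" for t U
    proof -
      have "supp (polar (wulff ?S (h t))) v \<le> exp U"
      proof (rule wulffpos.supp_polar_wulff_least[OF wp[OF t]])
        fix x assume xS: "x \<in> ?S"
        have hp: "0 < h t x" using hpos[OF t xS] .
        show "(x \<bullet> v) / h t x \<le> exp U"
        proof (cases "0 < x \<bullet> v")
          case True
          then have "x \<in> X" using xS by (simp add: X_def)
          then have "F t x \<le> U" by (rule U)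
          then have "exp (F t x) \<le> exp U" by simp
          moreover have "exp (F t x) = (x \<bullet> v) / h t x" using True hp by (simp add: F_def exp_diff)
          ultimately show ?thesis by simp
        next
          case False
          then have "(x \<bullet> v) / h t x \<le> 0" using hp by (simp add: divide_nonpos_pos)
          then show ?thesis by (meson exp_gt_zero less_le_not_le order.trans nle_le)
        qed
      qed
      moreover have "0 < supp (polar (wulff ?S (h t))) v" using wulffpos.supp_polar_wulff_pos[OF wp[OF t] vS] .
      ultimately have "ln (supp (polar (wulff ?S (h t))) v) \<le> ln (exp U)" by (subst ln_le_cancel_iff) auto
      then show ?thesis by (simp add: Mf_def)
    qed
    have expand: "\<bar>F t x - F 0 x - t * G x\<bar> \<le> C * t\<^sup>2" if t: "\<bar>t\<bar> < \<delta>" and x: "x \<in> X" for t x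
    proof -
      have xS: "x \<in> ?S" using x by (auto simp: X_def)
      have "ln (h 0 x) = - ln (radial K x)"
        using h0[OF xS] radial_pos[OF xS] by (simp add: ln_div)
      then have "F t x - F 0 x - t * G x = - (ln (h t x) + ln (radial K x) - t * g x)"
        by (simp add: F_def G_def algebra_simps)
      then show ?thesis using hexp[OF t xS] by simp
    qed
    have max0: "F 0 ?x0 = Mf 0 v"
    proof -
      have "F 0 ?x0 = ln (?x0 \<bullet> v) - ln (1 / radial K ?x0)" using h0[OF fmap_S] by (simp add: F_def)
      also have "\<dots> = ln (radial K ?x0 * (?x0 \<bullet> v))"
      proof -
        have a: "0 < ?x0 \<bullet> v" using x0X by (simp add: X_def)
        have b: "0 < radial K ?x0" using radial_pos[OF fmap_S[of v]] .
        show ?thesis using a b by (simp add: ln_div ln_mult)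
      qed
      also have "\<dots> = Mf 0 v" using kx0 supp0[OF vS vN] by (simp add: Mf_def)
      finally show ?thesis .
    qed
    have near: "\<exists>\<eta>>0. \<forall>x\<in>X. Mf 0 v - \<eta> \<le> F 0 x \<longrightarrow> \<bar>G x - G ?x0\<bar> \<le> \<epsilon>" if e: "\<epsilon> > 0" for \<epsilon>
    proof -
      obtain \<eta> where eta: "\<eta> > 0" "\<forall>x\<in>?S. 0 < x \<bullet> v \<longrightarrow> ln (supp K v) - \<eta> \<le> ln (radial K x * (x \<bullet> v))
           \<longrightarrow> \<bar>g x - g ?x0\<bar> \<le> \<epsilon>" using near_lemma[OF vS vN gc e] by blast
      show ?thesis
      proof (intro exI[of _ \<eta>] conjI ballI impI eta(1))
        fix x assume x: "x \<in> X" and le: "Mf 0 v - \<eta> \<le> F 0 x"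
        have xS: "x \<in> ?S" and xv: "0 < x \<bullet> v" using x by (auto simp: X_def)
        have "F 0 x = ln (radial K x * (x \<bullet> v))"
          using h0[OF xS] radial_pos[OF xS] xv by (simp add: F_def ln_div ln_mult)
        moreover have "Mf 0 v = ln (supp K v)" using supp0[OF vS vN] by (simp add: Mf_def)
        ultimately have "ln (supp K v) - \<eta> \<le> ln (radial K x * (x \<bullet> v))" using le by simp
        then have "\<bar>g x - g ?x0\<bar> \<le> \<epsilon>" using eta(2) xS xv by blast
        then show "\<bar>G x - G ?x0\<bar> \<le> \<epsilon>" by (simp add: G_def abs_minus_commute)
      qed
    qed
    have lim: "((\<lambda>t. (Mf t v - Mf 0 v) / t) \<longlongrightarrow> G ?x0) (at 0)"
      by (rule envelope_lim[of X G Bg ?x0 \<delta> C F "\<lambda>t. Mf t v"])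
         (use GB x0X d0 C upper least expand max0 near in auto)
    have bnd: "\<bar>Mf t v - Mf 0 v\<bar> \<le> \<bar>t\<bar> * Bg + C * t\<^sup>2" if t: "\<bar>t\<bar> < \<delta>" for t
      by (rule envelope_bound[of X G Bg ?x0 \<delta> F "\<lambda>t. Mf t v" C t])
         (use GB x0X d0 upper least expand max0 t in auto)
    show ?thesis using lim bnd by (simp add: G_def)
  qed
  have Mf_cont: "continuous_on ?S (Mf t)" if t: "\<bar>t\<bar> < \<delta>" for t
    unfolding Mf_def
  proof (rule continuous_on_ln[OF wulffpos.supp_polar_wulff_cont[OF wp[OF t]]], intro ballI)
    fix v :: 'a assume "v \<in> ?S"
    from wulffpos.supp_polar_wulff_pos[OF wp[OF t] this]
    show "supp (polar (wulff ?S (h t))) v \<noteq> 0" by simp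
  qed
  have Mf_meas: "Mf t \<in> borel_measurable M" if t: "\<bar>t\<bar> < \<delta>" for t
  proof -
    have "Mf t \<in> borel_measurable sphere_borel"
      unfolding sphere_borel_def by (rule borel_measurable_continuous_on_restrict[OF Mf_cont[OF t]])
    then show ?thesis using measurable_cong_sets[OF sM refl] by blast
  qed
  have Mf_int: "integrable M (Mf t)" if t: "\<bar>t\<bar> < \<delta>" for t
  proof -
    have "bounded (Mf t ` ?S)" by (rule compact_imp_bounded[OF compact_continuous_image[OF Mf_cont[OF t] compact_sphere]])
    then obtain b where b: "\<forall>y\<in>Mf t ` ?S. norm y \<le> b" unfolding bounded_iff by blast
    have "AE v in M. norm (Mf t v) \<le> b" using b spM by (intro AE_I2) auto
    then show ?thesis using finite_measure.integrable_const_bound[OF fin _ Mf_meas[OF t]] by blast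
  qed
  have gm: "(\<lambda>v. g (fmap K v)) \<in> borel_measurable M"
  proof -
    have "g \<in> borel_measurable sphere_borel"
      unfolding sphere_borel_def by (rule borel_measurable_continuous_on_restrict[OF gc])
    then have "(\<lambda>v. g (fmap K v)) \<in> borel_measurable sphere_borel"
      using measurable_comp[OF fmap_meas] by (simp add: comp_def)
    then show ?thesis using measurable_cong_sets[OF sM refl] by blast
  qed
  define \<Phi> where "\<Phi> t = (\<integral>v. Mf t v \<partial>M)" for t
  have gen: "gen_entropy M (polar (wulff ?S (h t))) = - \<Phi> t" for t
    by (simp add: gen_entropy_def \<Phi>_def Mf_def)
  have N: "Nsph K \<in> null_sets M" using Nsph_null[OF ac] .
  have AEgood: "AE v in M. v \<in> ?S \<and> v \<notin> Nset K"
  proof -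
    have "AE v in M. v \<notin> Nsph K" using AE_not_in[OF N] .
    then show ?thesis using AE_space[of M] by eventually_elim (use spM in \<open>auto simp: Nsph_def\<close>)
  qed
  have Q: "((\<lambda>t. (\<Phi> t - \<Phi> 0) / t) \<longlongrightarrow> - (\<integral>v. g (fmap K v) \<partial>M)) (at 0)"
    unfolding tendsto_at_iff_sequentially
  proof (intro allI impI)
    fix X :: "nat \<Rightarrow> real" assume Xn: "\<forall>i. X i \<in> UNIV - {0}" and X0: "X \<longlonglongrightarrow> 0"
    obtain n0 where n0: "\<And>n. n \<ge> n0 \<Longrightarrow> \<bar>X n\<bar> < \<delta>"
      using X0 d0 unfolding LIMSEQ_iff by fastforce
    define Y where "Y i = X (i + n0)" for i
    have Yd: "\<bar>Y i\<bar> < \<delta>" for i using n0 by (simp add: Y_def)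
    have Yn: "Y i \<noteq> 0" for i using Xn by (simp add: Y_def)
    have Y0: "Y \<longlonglongrightarrow> 0" unfolding Y_def using LIMSEQ_ignore_initial_segment[OF X0, of n0] .
    have Yat: "filterlim Y (at 0) sequentially"
      by (rule filterlim_atI[OF Y0]) (use Yn in auto)
    define q where "q t v = (Mf t v - Mf 0 v) / t" for t v
    have qeq: "(\<Phi> (Y i) - \<Phi> 0) / Y i = (\<integral>v. q (Y i) v \<partial>M)" for i
    proof -
      have "(\<integral>v. q (Y i) v \<partial>M) = (\<integral>v. Mf (Y i) v - Mf 0 v \<partial>M) / Y i"
        unfolding q_def by (rule integral_divide_zero)
      also have "(\<integral>v. Mf (Y i) v - Mf 0 v \<partial>M) = \<Phi> (Y i) - \<Phi> 0"
        unfolding \<Phi>_def by (rule Bochner_Integration.integral_diff[OF Mf_int[OF Yd] Mf_int[OF d00]])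
      finally show ?thesis by simp
    qed
    have conv: "(\<lambda>i. \<integral>v. q (Y i) v \<partial>M) \<longlonglongrightarrow> (\<integral>v. - g (fmap K v) \<partial>M)"
    proof (rule integral_dominated_convergence[where w = "\<lambda>_. Bg + C * \<delta>"])
      show "(\<lambda>v. - g (fmap K v)) \<in> borel_measurable M" using gm by measurable
      show "q (Y i) \<in> borel_measurable M" for i
        unfolding q_def using Mf_meas[OF Yd] Mf_meas[OF d00] by measurable
      show "integrable M (\<lambda>_. Bg + C * \<delta>)" using finite_measure.integrable_const[OF fin] .
      show "AE v in M. (\<lambda>i. q (Y i) v) \<longlonglongrightarrow> - g (fmap K v)"
        using AEgood
      proof eventually_elim
        fix v assume "v \<in> ?S \<and> v \<notin> Nset K"
        then have "((\<lambda>t. q t v) \<longlongrightarrow> - g (fmap K v)) (at 0)" using env unfolding q_def by blast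
        from filterlim_compose[OF this Yat] show "(\<lambda>i. q (Y i) v) \<longlonglongrightarrow> - g (fmap K v)" .
      qed
      show "AE v in M. norm (q (Y i) v) \<le> Bg + C * \<delta>" for i
        using AEgood
      proof eventually_elim
        fix v assume "v \<in> ?S \<and> v \<notin> Nset K"
        then have b: "\<bar>Mf (Y i) v - Mf 0 v\<bar> \<le> \<bar>Y i\<bar> * Bg + C * (Y i)\<^sup>2" using env Yd by blast
        have ay: "\<bar>Y i\<bar> > 0" using Yn by simp
        have "\<bar>q (Y i) v\<bar> = \<bar>Mf (Y i) v - Mf 0 v\<bar> / \<bar>Y i\<bar>" by (simp add: q_def abs_divide)
        also have "\<dots> \<le> (\<bar>Y i\<bar> * Bg + C * (Y i)\<^sup>2) / \<bar>Y i\<bar>" using b ay by (simp add: divide_right_mono)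
        also have "\<dots> = Bg + C * \<bar>Y i\<bar>" using ay by (simp add: field_simps power2_eq_square abs_mult_self_eq)
        also have "\<dots> \<le> Bg + C * \<delta>" using Yd C by (simp add: mult_left_mono less_imp_le)
        finally show "norm (q (Y i) v) \<le> Bg + C * \<delta>" by simp
      qed
    qed
    have "(\<lambda>i. (\<Phi> (Y i) - \<Phi> 0) / Y i) \<longlonglongrightarrow> - (\<integral>v. g (fmap K v) \<partial>M)"
      using conv by (simp add: qeq)
    then have "(\<lambda>i. (\<Phi> (X (i + n0)) - \<Phi> 0) / X (i + n0)) \<longlonglongrightarrow> - (\<integral>v. g (fmap K v) \<partial>M)"
      by (simp add: Y_def)
    then have "(\<lambda>i. (\<Phi> (X i) - \<Phi> 0) / X i) \<longlonglongrightarrow> - (\<integral>v. g (fmap K v) \<partial>M)"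
      by (rule LIMSEQ_offset)
    then show "((\<lambda>t. (\<Phi> t - \<Phi> 0) / t) \<circ> X) \<longlonglongrightarrow> - (\<integral>v. g (fmap K v) \<partial>M)"
      by (simp add: comp_def)
  qed
  have "((\<lambda>t. - ((\<Phi> t - \<Phi> 0) / t)) \<longlongrightarrow> (\<integral>v. g (fmap K v) \<partial>M)) (at 0)"
    using tendsto_minus[OF Q] by simp
  moreover have "(\<lambda>t. (gen_entropy M (polar (wulff ?S (h t))) - gen_entropy M (polar (wulff ?S (h 0)))) / (t - 0))
      = (\<lambda>t. - ((\<Phi> t - \<Phi> 0) / t))"
    by (rule ext) (simp add: gen diff_divide_distrib)
  ultimately have "((\<lambda>t. (gen_entropy M (polar (wulff ?S (h t))) - gen_entropy M (polar (wulff ?S (h 0)))) / (t - 0))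
      \<longlongrightarrow> (\<integral>v. g (fmap K v) \<partial>M)) (at 0)"
    by simp
  then show ?thesis by (simp add: has_field_derivative_iff)
qed

end


lemma supp_polar_posS:
  assumes "cbody K r R" "x \<in> sphere 0 1"
  shows "0 < supp (polar K) x"
  using cbody.supp_polar[OF assms] cbody.radial_pos[OF assms] by simp

lemma supp_polar_cont:
  assumes "cbody K r R"
  shows "continuous_on A (supp (polar K))"
  using supp_continuous[OF cbody.polar_sub[OF assms] cbody.polar_nonempty[OF assms]] .

lemma radial_meas:
  assumes "cbody K r R"
  shows "radial K \<in> borel_measurable sphere_borel"
  unfolding sphere_borel_def using cbody.radial_cont[OF assms]
  by (rule borel_measurable_continuous_on_restrict)

lemma compact_bound:
  fixes f :: "'a::euclidean_space \<Rightarrow> real"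
  assumes "continuous_on (sphere 0 1) f"
  obtains B where "\<And>x. x \<in> sphere 0 1 \<Longrightarrow> \<bar>f x\<bar> \<le> B" "0 \<le> B"
proof -
  have "bounded (f ` sphere 0 1)" by (rule compact_imp_bounded[OF compact_continuous_image[OF assms compact_sphere]])
  then obtain b where b: "\<forall>y\<in>f ` sphere 0 1. norm y \<le> b" unfolding bounded_iff by blast
  show ?thesis using that[of "max b 0"] b by force
qed

theorem lemma4p3:
  fixes M :: "'a::euclidean_space measure" and K L :: "'a set"
  assumes "sets M = sets sphere_borel"
    and "finite_measure M"
    and "absolutely_continuous spherical_lebesgue M"
    and "convex_body0 K" and "convex_body0 L"
  shows "(\<forall>p::real. p \<noteq> 0 \<longrightarrow>
            ((\<lambda>t. gen_entropy M (lp_harm_comb p K t L)) has_real_derivative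
               (1 / p) * (\<integral>u. radial L u powr (- p) \<partial>(lp_gauss_image_measure p M K))) (at 0))
       \<and> ((\<lambda>t. gen_entropy M (lp_harm_comb 0 K t L)) has_real_derivative
               - (\<integral>u. ln (radial L u) \<partial>(gauss_image_measure M K))) (at 0)"
proof -
  let ?S = "sphere (0::'a) 1"
  note sM = assms(1) and fin = assms(2) and ac = assms(3)
  obtain rK RK where cK: "cbody K rK RK" using cbodyI[OF assms(4)] .
  obtain rL RL where cL: "cbody L rL RL" using cbodyI[OF assms(5)] .
  have fm: "fmap K \<in> M \<rightarrow>\<^sub>M sphere_borel"
    using cbody.fmap_meas[OF cK] measurable_cong_sets[OF sM refl] by blast
  have geq: "gauss_image_measure M K = distr M sphere_borel (fmap K)"
    using cbody.gauss_eq[OF cK sM ac] .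
  have fS: "fmap K v \<in> ?S" for v using cbody.fmap_S[OF cK] .
  have hK: "supp (polar K) x = 1 / radial K x" if "x \<in> ?S" for x using cbody.supp_polar[OF cK that] .
  have hL: "supp (polar L) x = 1 / radial L x" if "x \<in> ?S" for x using cbody.supp_polar[OF cL that] .
  have rKp: "0 < radial K x" if "x \<in> ?S" for x using cbody.radial_pos[OF cK that] .
  have rLp: "0 < radial L x" if "x \<in> ?S" for x using cbody.radial_pos[OF cL that] .
  have hKp: "0 < supp (polar K) x" if "x \<in> ?S" for x using supp_polar_posS[OF cK that] .
  have hLp: "0 < supp (polar L) x" if "x \<in> ?S" for x using supp_polar_posS[OF cL that] .
  have cKc: "continuous_on ?S (supp (polar K))" using supp_polar_cont[OF cK] .
  have cLc: "continuous_on ?S (supp (polar L))" using supp_polar_cont[OF cL] .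
  have part1: "((\<lambda>t. gen_entropy M (lp_harm_comb p K t L)) has_real_derivative
               (1 / p) * (\<integral>u. radial L u powr (- p) \<partial>(lp_gauss_image_measure p M K))) (at 0)"
    if p: "p \<noteq> 0" for p
  proof -
    define A where "A x = supp (polar K) x powr p" for x
    define B where "B x = supp (polar L) x powr p" for x
    define h where "h t x = (A x + t * B x) powr (1 / p)" for t x
    define q where "q x = B x / A x" for x
    define g where "g x = (1 / p) * q x" for x
    have Ap: "0 < A x" if "x \<in> ?S" for x using hKp[OF that] by (simp add: A_def)
    have Bp: "0 < B x" if "x \<in> ?S" for x using hLp[OF that] by (simp add: B_def)
    have Ac: "continuous_on ?S A" unfolding A_def
      using hKp by (intro continuous_on_powr cKc continuous_on_const) (auto simp: less_le)
    have Bc: "continuous_on ?S B" unfolding B_def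
      using hLp by (intro continuous_on_powr cLc continuous_on_const) (auto simp: less_le)
    have qc: "continuous_on ?S q" unfolding q_def
      using Ap by (intro continuous_on_divide Ac Bc) (auto simp: less_le)
    obtain Br where Br: "\<And>x. x \<in> ?S \<Longrightarrow> \<bar>q x\<bar> \<le> Br" "0 \<le> Br" using compact_bound[OF qc] by blast
    define \<delta> where "\<delta> = 1 / (2 * Br + 2)"
    have d0: "0 < \<delta>" using Br(2) by (simp add: \<delta>_def)
    define C where "C = \<bar>1 / p\<bar> * (2 * Br\<^sup>2)"
    have C: "0 \<le> C" by (simp add: C_def)
    have tq: "\<bar>t * q x\<bar> \<le> 1 / 2" if t: "\<bar>t\<bar> < \<delta>" and x: "x \<in> ?S" for t x
    proof -
      have "\<bar>t * q x\<bar> = \<bar>t\<bar> * \<bar>q x\<bar>" by (simp add: abs_mult)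
      also have "\<dots> \<le> \<delta> * Br" using t Br(1)[OF x] Br(2) by (intro mult_mono) auto
      also have "\<dots> \<le> 1 / 2" using Br(2) by (simp add: \<delta>_def field_simps)
      finally show ?thesis .
    qed
    have ABq: "A x + t * B x = A x * (1 + t * q x)" if x: "x \<in> ?S" for t x
      using Ap[OF x] by (simp add: q_def field_simps)
    have ABp: "0 < A x + t * B x" if t: "\<bar>t\<bar> < \<delta>" and x: "x \<in> ?S" for t x
    proof -
      have "0 < 1 + t * q x" using tq[OF t x] by linarith
      then show ?thesis using ABq[OF x] Ap[OF x] by simp
    qed
    have hpos: "0 < h t x" if t: "\<bar>t\<bar> < \<delta>" and x: "x \<in> ?S" for t x
      using ABp[OF t x] by (simp add: h_def)
    have lnA: "(1 / p) * ln (A x) = - ln (radial K x)" if x: "x \<in> ?S" for x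
      using p rKp[OF x] by (simp add: A_def hK[OF x] ln_powr ln_div)
    have hexp: "\<bar>ln (h t x) + ln (radial K x) - t * g x\<bar> \<le> C * t\<^sup>2"
      if t: "\<bar>t\<bar> < \<delta>" and x: "x \<in> ?S" for t x
    proof -
      have one: "0 < 1 + t * q x" using tq[OF t x] by linarith
      have "ln (h t x) = (1 / p) * ln (A x + t * B x)" by (simp add: h_def ln_powr)
      also have "\<dots> = (1 / p) * ln (A x) + (1 / p) * ln (1 + t * q x)"
      proof -
        have e: "ln (A x + t * B x) = ln (A x) + ln (1 + t * q x)"
          unfolding ABq[OF x] using Ap[OF x] one by (simp add: ln_mult)
        show ?thesis by (simp only: e distrib_left)
      qed
      finally have "ln (h t x) + ln (radial K x) - t * g x = (1 / p) * (ln (1 + t * q x) - t * q x)"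
        using lnA[OF x] by (simp add: g_def algebra_simps)
      then have "\<bar>ln (h t x) + ln (radial K x) - t * g x\<bar> = \<bar>1 / p\<bar> * \<bar>ln (1 + t * q x) - t * q x\<bar>"
        by (simp add: abs_mult)
      also have "\<dots> \<le> \<bar>1 / p\<bar> * (2 * (t * q x)\<^sup>2)"
        by (intro mult_left_mono abs_ln_one_plus_x_minus_x_bound tq[OF t x]) simp
      also have "(t * q x)\<^sup>2 \<le> Br\<^sup>2 * t\<^sup>2"
      proof -
        have "\<bar>q x\<bar>\<^sup>2 \<le> Br\<^sup>2" by (rule power_mono[OF Br(1)[OF x]]) simp
        then have "(q x)\<^sup>2 \<le> Br\<^sup>2" by simp
        then have "(q x)\<^sup>2 * t\<^sup>2 \<le> Br\<^sup>2 * t\<^sup>2" by (rule mult_right_mono) simp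
        then show ?thesis by (simp add: power_mult_distrib mult.commute)
      qed
      then have "\<bar>1 / p\<bar> * (2 * (t * q x)\<^sup>2) \<le> \<bar>1 / p\<bar> * (2 * (Br\<^sup>2 * t\<^sup>2))"
        by (intro mult_left_mono) auto
      then have "\<bar>1 / p\<bar> * (2 * (t * q x)\<^sup>2) \<le> C * t\<^sup>2" by (simp add: C_def mult.assoc)
      finally show ?thesis .
    qed
    have gc: "continuous_on ?S g" unfolding g_def by (intro continuous_intros qc)
    have D: "((\<lambda>t. gen_entropy M (polar (wulff ?S (h t)))) has_real_derivative (\<integral>v. g (fmap K v) \<partial>M)) (at 0)"
      by (rule cbody.main_deriv[OF cK sM fin ac d0 C hpos hexp gc])
    have lhs: "lp_harm_comb p K t L = polar (wulff ?S (h t))" for t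
    proof -
      have "h t = (\<lambda>x. (supp (polar K) x powr p + t * supp (polar L) x powr p) powr (1 / p))"
        by (rule ext) (simp add: h_def A_def B_def)
      then show ?thesis using p by (simp add: lp_harm_comb_def lp_comb_def)
    qed
    have ge: "g u = (1 / p) * (radial K u powr p * radial L u powr (- p))" if u: "u \<in> ?S" for u
    proof -
      have "q u = radial K u powr p * radial L u powr (- p)"
        using rKp[OF u] rLp[OF u]
        by (simp add: q_def A_def B_def hK[OF u] hL[OF u] powr_divide powr_minus_divide)
      then show ?thesis by (simp add: g_def)
    qed
    have m1: "(\<lambda>u. radial L u powr (- p)) \<in> borel_measurable sphere_borel"
      using radial_meas[OF cL] by measurable
    have m2: "(\<lambda>u. radial K u powr p) \<in> borel_measurable sphere_borel"
      using radial_meas[OF cK] by measurable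
    have "(\<integral>u. radial L u powr (- p) \<partial>(lp_gauss_image_measure p M K))
        = (\<integral>u. radial K u powr p * radial L u powr (- p) \<partial>(distr M sphere_borel (fmap K)))"
      unfolding lp_gauss_image_measure_def geq
      using m1 m2 by (subst integral_density) auto
    also have "\<dots> = (\<integral>v. radial K (fmap K v) powr p * radial L (fmap K v) powr (- p) \<partial>M)"
      using m1 m2 by (subst integral_distr[OF fm]) auto
    finally have R: "(1 / p) * (\<integral>u. radial L u powr (- p) \<partial>(lp_gauss_image_measure p M K))
        = (\<integral>v. g (fmap K v) \<partial>M)"
      using ge[OF fS] by simp
    show ?thesis using D R by (simp add: lhs)
  qed
  have part2: "((\<lambda>t. gen_entropy M (lp_harm_comb 0 K t L)) has_real_derivative
               - (\<integral>u. ln (radial L u) \<partial>(gauss_image_measure M K))) (at 0)"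
  proof -
    define h where "h t x = supp (polar K) x * supp (polar L) x powr t" for t x
    define g where "g x = ln (supp (polar L) x)" for x
    have d0: "(0::real) < 1" by simp
    have C: "(0::real) \<le> 0" by simp
    have hpos: "0 < h t x" if "\<bar>t\<bar> < 1" and x: "x \<in> ?S" for t x
      using hKp[OF x] hLp[OF x] by (simp add: h_def)
    have hexp: "\<bar>ln (h t x) + ln (radial K x) - t * g x\<bar> \<le> 0 * t\<^sup>2"
      if "\<bar>t\<bar> < 1" and x: "x \<in> ?S" for t x
    proof -
      have "ln (h t x) = ln (supp (polar K) x) + t * ln (supp (polar L) x)"
        using hKp[OF x] hLp[OF x] by (simp add: h_def ln_mult ln_powr)
      moreover have "ln (supp (polar K) x) = - ln (radial K x)" using rKp[OF x] by (simp add: hK[OF x] ln_div)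
      ultimately show ?thesis by (simp add: g_def)
    qed
    have gc: "continuous_on ?S g" unfolding g_def
    proof (rule continuous_on_ln[OF cLc], intro ballI)
      fix x :: 'a assume "x \<in> ?S" then show "supp (polar L) x \<noteq> 0" using hLp by force
    qed
    have D: "((\<lambda>t. gen_entropy M (polar (wulff ?S (h t)))) has_real_derivative (\<integral>v. g (fmap K v) \<partial>M)) (at 0)"
      by (rule cbody.main_deriv[OF cK sM fin ac d0 C hpos hexp gc])
    have lhs: "lp_harm_comb 0 K t L = polar (wulff ?S (h t))" for t
    proof -
      have "h t = (\<lambda>x. supp (polar K) x * supp (polar L) x powr t)"
        by (rule ext) (simp add: h_def)
      then show ?thesis by (simp add: lp_harm_comb_def lp_comb_def)
    qed
    have ge: "g u = - ln (radial L u)" if u: "u \<in> ?S" for u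
      using rLp[OF u] by (simp add: g_def hL[OF u] ln_div)
    have m1: "(\<lambda>u. ln (radial L u)) \<in> borel_measurable sphere_borel"
      using radial_meas[OF cL] by measurable
    have "(\<integral>u. ln (radial L u) \<partial>(gauss_image_measure M K)) = (\<integral>v. ln (radial L (fmap K v)) \<partial>M)"
      unfolding geq using m1 by (subst integral_distr[OF fm]) auto
    moreover have "(\<integral>v. g (fmap K v) \<partial>M) = (\<integral>v. - ln (radial L (fmap K v)) \<partial>M)"
      using ge[OF fS] by simp
    moreover have "(\<integral>v. - ln (radial L (fmap K v)) \<partial>M) = - (\<integral>v. ln (radial L (fmap K v)) \<partial>M)"
      by (rule integral_minus)
    ultimately have R: "- (\<integral>u. ln (radial L u) \<partial>(gauss_image_measure M K)) = (\<integral>v. g (fmap K v) \<partial>M)"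
      by simp
    show ?thesis using D R by (simp add: lhs)
  qed
  show ?thesis using part1 part2 by blast
qed


end
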